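(* Let $\mathrm{K}$ be a semi-symmetric curvature tensor on a finite-dimensional pseudo-Euclidean vector space $(V,\langle\cdot,\cdot\rangle)$ and let $\chi$ be the minimal polynomial (over $\mathbb{R}$) of its Ricci operator $\mathrm{Ric}$. Then: (1) $\chi=\prod_i P_i$ where the $P_i$ are pairwise coprime and each $P_i$ is either irreducible or equal to $X^2$. Write $P_1,\dots,P_r$ for the factors not in $\{X,X^2\}$ (each irreducible and coprime to $X$). (2) $V$ splits as an orthogonal direct sum $V=E_0\oplus E_1\oplus\cdots\oplus E_r$, where $E_0=\ker(\mathrm{Ric}^2)$ and $E_i=\ker(P_i(\mathrm{Ric}))$ for $1\le i\le r$. (3) Each $E_i$ ($0\le i\le r$) is invariant under every $\mathrm{K}(u,v)$, $u,v\in V$. (4) For $i\neq j$, $\mathrm{K}(u,v)=0$ whenever $u\in E_i$, $v\in E_j$. (5) $\dim E_i\ge 2$ for every $1\le i\le r$. (6) $\mathfrak{h}(\mathrm{K})=\mathfrak{h}_0(\mathrm{K})+\mathfrak{h}_1(\mathrm{K})+\cdots+\mathfrak{h}_r(\mathrm{K})$, where $\mathfrak{h}_i(\mathrm{K})$ is the span of $\{\mathrm{K}(x,y): x,y\in E_i\}$, and each $\mathfrak{h}_i(\mathrm{K})$ is a Lie subalgebra.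
   Context: A curvature tensor on a pseudo-Euclidean vector space $(V,\langle\cdot,\cdot\rangle)$ is a bilinear map $\mathrm{K}:V\times V\to \mathfrak{so}(V,\langle\cdot,\cdot\rangle)$ with $\mathrm{K}(u,v)=-\mathrm{K}(v,u)$, $\mathrm{K}(u,v)w+\mathrm{K}(v,w)u+\mathrm{K}(w,u)v=0$, and $\langle \mathrm{K}(a,b)u,v\rangle=\langle \mathrm{K}(u,v)a,b\rangle$. It is semi-symmetric if $[\mathrm{K}(u,v),\mathrm{K}(a,b)]=\mathrm{K}(\mathrm{K}(u,v)a,b)+\mathrm{K}(a,\mathrm{K}(u,v)b)$ for all $u,v,a,b\in V$. $\mathfrak{h}(\mathrm{K})$ denotes the linear span of $\{\mathrm{K}(u,v):u,v\in V\}$ in $\mathfrak{so}(V)$. The Ricci operator $\mathrm{Ric}$ is the symmetric endomorphism with $\langle\mathrm{Ric}(u),v\rangle=\operatorname{trace}(a\mapsto \mathrm{K}(u,a)v)$. *)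

theory Defs
  imports "HOL-Analysis.Analysis" "HOL-Computational_Algebra.Polynomial"
begin

text \<open>Endomorphisms of V = real^'n are represented as functions (for the Ricci operator)
  and as matrices (for the values K(u,v), so that their span lives in a real vector space).\<close>

definition trace_op :: "(real^'n \<Rightarrow> real^'n) \<Rightarrow> real" where
  "trace_op f = (\<Sum>i\<in>UNIV. f (axis i 1) $ i)"

definition poly_op :: "real poly \<Rightarrow> (real^'n \<Rightarrow> real^'n) \<Rightarrow> real^'n \<Rightarrow> real^'n" where
  "poly_op p f x = (\<Sum>i\<le>degree p. coeff p i *\<^sub>R (f ^^ i) x)"

definition is_min_poly :: "(real^'n \<Rightarrow> real^'n) \<Rightarrow> real poly \<Rightarrow> bool" where
  "is_min_poly f p \<longleftrightarrow> lead_coeff p = 1 \<and> (\<forall>x. poly_op p f x = 0)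
     \<and> (\<forall>q. (\<forall>x. poly_op q f x = 0) \<longrightarrow> p dvd q)"

definition min_poly :: "(real^'n \<Rightarrow> real^'n) \<Rightarrow> real poly" where
  "min_poly f = (THE p. is_min_poly f p)"

definition pseudo_euclidean :: "(real^'n \<Rightarrow> real^'n \<Rightarrow> real) \<Rightarrow> bool" where
  "pseudo_euclidean B \<longleftrightarrow> bilinear B \<and> (\<forall>x y. B x y = B y x)
     \<and> (\<forall>x. (\<forall>y. B x y = 0) \<longrightarrow> x = 0)"

definition curvature_tensor ::
  "(real^'n \<Rightarrow> real^'n \<Rightarrow> real) \<Rightarrow> (real^'n \<Rightarrow> real^'n \<Rightarrow> real^'n^'n) \<Rightarrow> bool" where
  "curvature_tensor B K \<longleftrightarrow> bilinear K
     \<and> (\<forall>u v x y. B (K u v *v x) y = - B x (K u v *v y))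
     \<and> (\<forall>u v. K u v = - K v u)
     \<and> (\<forall>u v w. K u v *v w + K v w *v u + K w u *v v = 0)
     \<and> (\<forall>a b u v. B (K a b *v u) v = B (K u v *v a) b)"

definition semi_symmetric :: "(real^'n \<Rightarrow> real^'n \<Rightarrow> real^'n^'n) \<Rightarrow> bool" where
  "semi_symmetric K \<longleftrightarrow> (\<forall>u v a b.
     K u v ** K a b - K a b ** K u v = K (K u v *v a) b + K a (K u v *v b))"

text \<open>Ric is the (unique, by nondegeneracy) linear map with B (Ric u) v = trace (a \<mapsto> K(u,a) v).\<close>
definition is_ricci ::
  "(real^'n \<Rightarrow> real^'n \<Rightarrow> real) \<Rightarrow> (real^'n \<Rightarrow> real^'n \<Rightarrow> real^'n^'n) \<Rightarrow> (real^'n \<Rightarrow> real^'n) \<Rightarrow> bool" where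
  "is_ricci B K Ric \<longleftrightarrow> linear Ric \<and> (\<forall>u v. B (Ric u) v = trace_op (\<lambda>a. K u a *v v))"

definition hol_alg :: "(real^'n \<Rightarrow> real^'n \<Rightarrow> real^'n^'n) \<Rightarrow> (real^'n) set \<Rightarrow> (real^'n^'n) set" where
  "hol_alg K E = span {K x y | x y. x \<in> E \<and> y \<in> E}"

definition lie_subalgebra :: "(real^'n^'n) set \<Rightarrow> bool" where
  "lie_subalgebra h \<longleftrightarrow> subspace h \<and> (\<forall>A\<in>h. \<forall>C\<in>h. A ** C - C ** A \<in> h)"

end

theory Submission imports Defs "HOL-Computational_Algebra.Polynomial_Factorial" "HOL-Computational_Algebra.Field_as_Ring" begin


section \<open>Polynomial operator calculus\<close>

lemma poly_op_lessThan:
  assumes "degree p < N"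
  shows "poly_op p f x = (\<Sum>i<N. coeff p i *\<^sub>R (f ^^ i) x)"
proof -
  have "{..degree p} \<subseteq> {..<N}" using assms by auto
  moreover have "\<forall>i\<in>{..<N} - {..degree p}. coeff p i *\<^sub>R (f ^^ i) x = 0"
    by (auto simp: coeff_eq_0)
  ultimately show ?thesis unfolding poly_op_def
    by (intro sum.mono_neutral_left) auto
qed

lemma poly_op_0[simp]: "poly_op 0 f x = 0"
  by (simp add: poly_op_def)

lemma poly_op_add: "poly_op (p + q) f x = poly_op p f x + poly_op q f x"
proof -
  define N where "N = Suc (max (degree p) (degree q))"
  have "degree (p + q) < N" using degree_add_le_max[of p q] N_def by linarith
  moreover have "degree p < N" "degree q < N" using N_def by auto
  ultimately show ?thesis
    by (simp add: poly_op_lessThan[of _ N] scaleR_add_left sum.distrib)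
qed

lemma poly_op_smult: "poly_op (smult c p) f x = c *\<^sub>R poly_op p f x"
proof -
  have d: "degree (smult c p) < Suc (degree p)" using degree_smult_le[of c p] by linarith
  have "poly_op (smult c p) f x = (\<Sum>i<Suc (degree p). coeff (smult c p) i *\<^sub>R (f ^^ i) x)"
    using d by (rule poly_op_lessThan)
  also have "\<dots> = c *\<^sub>R (\<Sum>i<Suc (degree p). coeff p i *\<^sub>R (f ^^ i) x)"
    by (simp only: scaleR_sum_right coeff_smult scaleR_scaleR)
  also have "(\<Sum>i<Suc (degree p). coeff p i *\<^sub>R (f ^^ i) x) = poly_op p f x"
    by (rule poly_op_lessThan[symmetric]) simp
  finally show ?thesis .
qed

lemma poly_op_diff: "poly_op (p - q) f x = poly_op p f x - poly_op q f x"
  using poly_op_add[of "p - q" q f x] by (simp add: algebra_simps)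

lemma poly_op_pCons:
  assumes "linear f"
  shows "poly_op (pCons a p) f x = a *\<^sub>R x + f (poly_op p f x)"
proof -
  define N where "N = Suc (degree p)"
  have d1: "degree (pCons a p) < Suc N" using degree_pCons_le[of a p] N_def by linarith
  have d2: "degree p < N" using N_def by auto
  have "poly_op (pCons a p) f x = (\<Sum>i<Suc N. coeff (pCons a p) i *\<^sub>R (f ^^ i) x)"
    using d1 by (rule poly_op_lessThan)
  also have "\<dots> = a *\<^sub>R x + (\<Sum>i<N. coeff p i *\<^sub>R f ((f ^^ i) x))"
    by (subst sum.lessThan_Suc_shift) simp
  also have "(\<Sum>i<N. coeff p i *\<^sub>R f ((f ^^ i) x)) = f (\<Sum>i<N. coeff p i *\<^sub>R (f ^^ i) x)"
    using assms by (simp add: linear_sum linear_cmul)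
  also have "(\<Sum>i<N. coeff p i *\<^sub>R (f ^^ i) x) = poly_op p f x"
    using d2 by (simp add: poly_op_lessThan[of _ N])
  finally show ?thesis .
qed

lemma poly_op_mult:
  assumes "linear f"
  shows "poly_op (p * q) f x = poly_op p f (poly_op q f x)"
proof (induction p arbitrary: x rule: pCons_induct)
  case 0
  then show ?case by simp
next
  case (pCons a p)
  show ?case
    by (simp add: mult_pCons_left poly_op_add poly_op_smult poly_op_pCons[OF assms] pCons.IH)
qed

lemma poly_op_1[simp]: "poly_op 1 f x = x"
  by (simp add: poly_op_def)

lemma poly_op_const: "poly_op [:c:] f x = c *\<^sub>R x"
  by (simp add: poly_op_def)

lemma poly_op_X:
  assumes "linear f"
  shows "poly_op [:0,1:] f x = f x"
  by (simp add: poly_op_pCons[OF assms] poly_op_const linear_0[OF assms])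

lemma poly_op_X2:
  assumes "linear f"
  shows "poly_op [:0,0,1:] f x = f (f x)"
  by (simp add: poly_op_pCons[OF assms] poly_op_const linear_0[OF assms])

lemma poly_op_power:
  assumes "linear f"
  shows "poly_op (p ^ k) f x = (poly_op p f ^^ k) x"
  by (induction k arbitrary: x) (simp_all add: poly_op_mult[OF assms])

lemma linear_poly_op:
  assumes "linear f"
  shows "linear (poly_op p f)"
proof (induction p rule: pCons_induct)
  case 0
  have "poly_op 0 f = (\<lambda>x. 0)" by (rule ext) simp
  then show ?case by (simp add: linear_zero)
next
  case (pCons a p)
  have eq: "poly_op (pCons a p) f = (\<lambda>x. a *\<^sub>R x + f (poly_op p f x))"
    by (rule ext) (rule poly_op_pCons[OF assms])
  show ?case unfolding eq
  proof (rule linearI)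
    fix x y
    show "a *\<^sub>R (x + y) + f (poly_op p f (x + y)) = (a *\<^sub>R x + f (poly_op p f x)) + (a *\<^sub>R y + f (poly_op p f y))"
      by (simp only: linear_add[OF pCons.IH] linear_add[OF assms] scaleR_add_right add_ac)
  next
    fix c x
    show "a *\<^sub>R (c *\<^sub>R x) + f (poly_op p f (c *\<^sub>R x)) = c *\<^sub>R (a *\<^sub>R x + f (poly_op p f x))"
      by (simp only: linear_cmul[OF pCons.IH] linear_cmul[OF assms] scaleR_add_right scaleR_scaleR mult.commute)
  qed
qed

lemma poly_op_zero_vec[simp]:
  assumes "linear f"
  shows "poly_op p f 0 = 0"
  using linear_poly_op[OF assms] linear_0 by blast

lemma poly_op_commute:
  assumes "linear f" "linear g" "\<And>x. g (f x) = f (g x)"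
  shows "g (poly_op p f x) = poly_op p f (g x)"
proof (induction p arbitrary: x rule: pCons_induct)
  case 0
  then show ?case using assms(2) by (simp add: linear_0)
next
  case (pCons a p)
  show ?case
    by (simp add: poly_op_pCons[OF assms(1)] linear_add[OF assms(2)] linear_cmul[OF assms(2)]
        assms(3) pCons.IH)
qed

lemma poly_op_sum:
  assumes "finite I"
  shows "poly_op (\<Sum>i\<in>I. g i) f x = (\<Sum>i\<in>I. poly_op (g i) f x)"
  using assms by (induction I rule: finite_induct) (simp_all add: poly_op_add)

lemma poly_op_monom:
  "poly_op (monom c i) f x = c *\<^sub>R (f ^^ i) x"
proof -
  have "degree (monom c i) < Suc i" using degree_monom_le[of c i] by linarith
  then show ?thesis
    by (simp add: poly_op_lessThan[of _ "Suc i"] coeff_monom)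
qed

lemma poly_op_ann_dvd:
  assumes "linear f" "\<forall>z. poly_op p f z = 0" "p dvd q"
  shows "poly_op q f x = 0"
proof -
  from assms(3) obtain r where "q = p * r" by (erule dvdE)
  then have "q = r * p" by (simp add: mult.commute)
  then show ?thesis using assms by (simp add: poly_op_mult)
qed

lemma linear_funpow:
  fixes f :: "'a::real_vector \<Rightarrow> 'a"
  assumes "linear f"
  shows "linear (f ^^ i)"
proof (induction i)
  case 0
  have "f ^^ 0 = id" by simp
  then show ?case using real_vector.linear_ident by simp
next
  case (Suc i)
  have "f ^^ Suc i = f \<circ> (f ^^ i)" by simp
  then show ?case using linear_compose[OF Suc.IH assms] by (simp add: o_def)
qed

section \<open>Existence of the minimal polynomial\<close>

lemma matrix_vector_sum_left:
  assumes "finite I"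
  shows "(\<Sum>i\<in>I. A i) *v x = (\<Sum>i\<in>I. A i *v x)"
  using assms by (induction I rule: finite_induct) (simp_all add: matrix_vector_mult_add_rdistrib)

lemma ann_exists:
  fixes f :: "real^'n \<Rightarrow> real^'n"
  assumes lf: "linear f"
  shows "\<exists>p. p \<noteq> 0 \<and> (\<forall>x. poly_op p f x = 0)"
proof -
  define D where "D = DIM(real^'n^'n)"
  define M where "M i = matrix (f ^^ i)" for i
  have Mw: "M i *v x = (f ^^ i) x" for i x
    unfolding M_def using linear_funpow[OF lf] by (simp add: matrix_works)
  show ?thesis
  proof (cases "inj_on M {..D}")
    case False
    then obtain i j where ij: "i \<noteq> j" "M i = M j" unfolding inj_on_def by auto
    have fij: "(f ^^ i) x = (f ^^ j) x" for x using ij Mw by metis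
    define p where "p = monom (1::real) i - monom 1 j"
    have "coeff p i = 1" using ij by (simp add: p_def coeff_monom)
    then have "p \<noteq> 0" by auto
    moreover have "poly_op p f x = 0" for x
      by (simp add: p_def poly_op_diff poly_op_monom fij)
    ultimately show ?thesis by blast
  next
    case True
    have "card (M ` {..D}) = Suc D" using True by (simp add: card_image)
    then have "\<not> independent (M ` {..D})"
      using independent_bound[of "M ` {..D}"] D_def by auto
    then obtain T u where T: "finite T" "T \<subseteq> M ` {..D}" "(\<Sum>v\<in>T. u v *\<^sub>R v) = 0"
      "\<exists>v\<in>T. u v \<noteq> 0"
      unfolding dependent_explicit by blast
    define I where "I = {i\<in>{..D}. M i \<in> T}"
    have TI: "T = M ` I" using T(2) unfolding I_def by auto
    have injI: "inj_on M I" using True by (rule inj_on_subset) (auto simp: I_def)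
    have fI: "finite I" unfolding I_def by auto
    define p where "p = (\<Sum>i\<in>I. monom (u (M i)) i)"
    have cp: "coeff p k = (if k \<in> I then u (M k) else 0)" for k
      unfolding p_def by (simp add: coeff_sum coeff_monom fI)
    from T(4) obtain i0 where "i0 \<in> I" "u (M i0) \<noteq> 0" unfolding TI by auto
    then have "p \<noteq> 0" using cp[of i0] by auto
    moreover have "poly_op p f x = 0" for x
    proof -
      have "poly_op p f x = (\<Sum>i\<in>I. u (M i) *\<^sub>R (M i *v x))"
        unfolding p_def by (simp add: poly_op_sum fI poly_op_monom Mw)
      also have "\<dots> = (\<Sum>i\<in>I. u (M i) *\<^sub>R M i) *v x"
        by (simp add: matrix_vector_sum_left fI scaleR_matrix_vector_assoc)
      also have "(\<Sum>i\<in>I. u (M i) *\<^sub>R M i) = (\<Sum>v\<in>T. u v *\<^sub>R v)"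
        unfolding TI by (simp add: sum.reindex[OF injI])
      finally show ?thesis using T(3) by simp
    qed
    ultimately show ?thesis by blast
  qed
qed

lemma monic_normalize_eq:
  fixes p :: "real poly"
  assumes "lead_coeff p = 1"
  shows "normalize p = p"
  using assms by (simp add: normalize_poly_def) (metis div_by_1 one_pCons)

lemma min_poly_works:
  fixes f :: "real^'n \<Rightarrow> real^'n"
  assumes lf: "linear f"
  shows "is_min_poly f (min_poly f)"
proof -
  define Ann where "Ann = {p. p \<noteq> 0 \<and> (\<forall>x. poly_op p f x = 0)}"
  obtain p1 where "p1 \<in> Ann" using ann_exists[OF lf] unfolding Ann_def by auto
  then obtain p0 where p0: "p0 \<in> Ann" "\<And>q. q \<in> Ann \<Longrightarrow> degree p0 \<le> degree q"
    using ex_has_least_nat[of "\<lambda>p. p \<in> Ann" p1 degree] by blast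
  define m where "m = smult (inverse (lead_coeff p0)) p0"
  have p0nz: "p0 \<noteq> 0" and p0a: "\<And>x. poly_op p0 f x = 0" using p0(1) unfolding Ann_def by auto
  have mlc: "lead_coeff m = 1" using p0nz by (simp add: m_def)
  have ma: "poly_op m f x = 0" for x by (simp add: m_def poly_op_smult p0a)
  have mdeg: "degree m = degree p0" using p0nz by (simp add: m_def)
  have mdvd: "m dvd q" if q: "\<forall>x. poly_op q f x = 0" for q
  proof -
    define r where "r = q mod m"
    have "q div m * m + r = q" unfolding r_def by simp
    then have "poly_op r f x = 0" for x
      using poly_op_add[of "q div m * m" r f x] q ma by (simp add: poly_op_mult[OF lf] lf)
    moreover have "m \<noteq> 0" using mlc by auto
    ultimately have "r = 0"
      using p0(2)[of r] degree_mod_less[of m q] mdeg unfolding r_def Ann_def by fastforce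
    then show ?thesis unfolding r_def by (simp add: dvd_eq_mod_eq_0)
  qed
  have ism: "is_min_poly f m" unfolding is_min_poly_def using mlc ma mdvd by auto
  have uniq: "p = m" if "is_min_poly f p" for p
  proof -
    from that have "lead_coeff p = 1" "\<forall>x. poly_op p f x = 0" "\<forall>q. (\<forall>x. poly_op q f x = 0) \<longrightarrow> p dvd q"
      unfolding is_min_poly_def by auto
    then have "p dvd m" "m dvd p" using ma mdvd by auto
    then show ?thesis using associated_eqI monic_normalize_eq \<open>lead_coeff p = 1\<close> mlc by metis
  qed
  have "min_poly f = m" unfolding min_poly_def using ism uniq by (rule the_equality)
  then show ?thesis using ism by simp
qed




section \<open>Trace\<close>

lemma lin_real: "linear f \<Longrightarrow> Vector_Spaces.linear (*s) (*s) (f :: real^'n \<Rightarrow> real^'m)"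
  by (simp add: linear_matrix_vector_mul_eq)

lemma lin_comp:
  fixes f :: "real^'n \<Rightarrow> real^'m"
  assumes "linear f"
  shows "f x $ i = (\<Sum>j\<in>UNIV. f (axis j 1) $ i * x $ j)"
proof -
  have "f x = matrix f *v x" using matrix_works[OF lin_real[OF assms]] by simp
  then show ?thesis by (simp add: matrix_vector_mult_def matrix_def)
qed

lemma trace_op_comm:
  fixes f g :: "real^'n \<Rightarrow> real^'n"
  assumes f: "linear f" and g: "linear g"
  shows "trace_op (f \<circ> g) = trace_op (g \<circ> f)"
proof -
  have A: "trace_op (f \<circ> g) = (\<Sum>i\<in>UNIV. \<Sum>j\<in>UNIV. f (axis j 1) $ i * g (axis i 1) $ j)"
    unfolding trace_op_def o_def by (rule sum.cong[OF refl]) (rule lin_comp[OF f])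
  have B: "trace_op (g \<circ> f) = (\<Sum>i\<in>UNIV. \<Sum>j\<in>UNIV. g (axis j 1) $ i * f (axis i 1) $ j)"
    unfolding trace_op_def o_def by (rule sum.cong[OF refl]) (rule lin_comp[OF g])
  have "(\<Sum>i\<in>UNIV. \<Sum>j\<in>UNIV. g (axis j 1) $ i * f (axis i 1) $ j)
      = (\<Sum>j\<in>UNIV. \<Sum>i\<in>UNIV. g (axis j 1) $ i * f (axis i 1) $ j)"
    by (rule sum.swap)
  also have "\<dots> = (\<Sum>j\<in>UNIV. \<Sum>i\<in>UNIV. f (axis i 1) $ j * g (axis j 1) $ i)"
    by (simp add: mult.commute)
  finally show ?thesis using A B by simp
qed

lemma trace_op_add: "trace_op (\<lambda>x. f x + g x) = trace_op f + trace_op g"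
  by (simp add: trace_op_def sum.distrib)

lemma trace_op_diff: "trace_op (\<lambda>x. f x - g x) = trace_op f - trace_op g"
  by (simp add: trace_op_def sum_subtractf)

lemma trace_op_uminus: "trace_op (\<lambda>x. - f x) = - trace_op f"
  by (simp add: trace_op_def sum_negf)

lemma trace_op_zero: "trace_op (\<lambda>x. 0) = 0"
  by (simp add: trace_op_def)

lemma proj_exists:
  fixes W :: "(real^'n) set"
  assumes sW: "subspace W"
  shows "\<exists>P. linear P \<and> (\<forall>w\<in>W. P w = w) \<and> (\<forall>x. P x \<in> W)"
proof -
  obtain Bw where Bw: "Bw \<subseteq> W" "independent Bw" "W \<subseteq> span Bw" "card Bw = dim W"
    by (rule basis_exists[of W])
  obtain Bv where Bv: "Bw \<subseteq> Bv" "Bv \<subseteq> UNIV" "independent Bv" "UNIV \<subseteq> span Bv"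
    by (rule maximal_independent_subset_extend[OF subset_UNIV Bw(2)])
  obtain g where g: "linear g" "\<forall>x\<in>Bv. g x = (if x \<in> Bw then x else 0)"
    using linear_independent_extend[OF Bv(3), of "\<lambda>x. if x \<in> Bw then x else 0"] by (elim exE conjE) 
  have sub: "subspace {w. g w = w}"
    unfolding subspace_def using g(1) by (simp add: linear_0 linear_add linear_cmul)
  have fix1: "g w = w" if "w \<in> span Bw" for w
  proof -
    have "\<And>x. x \<in> Bw \<Longrightarrow> g x = x" using g(2) Bv(1) by auto
    then show "g w = w" by (rule span_induct[OF that sub])
  qed
  have "g ` Bv \<subseteq> W" using g(2) Bw(1) subspace_0[OF sW] by auto
  then have "span (g ` Bv) \<subseteq> W" using span_minimal sW by blast
  then have gs: "g ` span Bv \<subseteq> W" using span_linear_image[OF g(1)] by simp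
  have gW: "g x \<in> W" for x
  proof -
    have "x \<in> span Bv" using Bv(4) by auto
    then show ?thesis using gs by blast
  qed
  have "\<forall>w\<in>W. g w = w" using fix1 Bw(3) by blast
  with g(1) gW show ?thesis by blast
qed

lemma trace_nilpotent_aux:
  "\<forall>T::real^'n\<Rightarrow>real^'n. linear T \<and> dim (range T) = d \<and> (\<forall>x. (T ^^ m) x = 0) \<longrightarrow> trace_op T = 0"
proof (induction d arbitrary: m rule: less_induct)
  case (less d)
  show ?case
  proof (intro allI impI, elim conjE)
    fix T :: "real^'n\<Rightarrow>real^'n"
    assume lin: "linear T" and dT: "dim (range T) = d" and nil: "\<forall>x. (T ^^ m) x = 0"
    define W where "W = range T"
    have sW: "subspace W" unfolding W_def by (rule real_vector.linear_subspace_image[OF lin subspace_UNIV])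
    show "trace_op T = 0"
    proof (cases "\<forall>x. T x = 0")
      case True
      then have "T = (\<lambda>x. 0)" by auto
      then show ?thesis by (simp add: trace_op_def)
    next
      case False
      then obtain x0 where x0: "T x0 \<noteq> 0" by auto
      obtain P where P: "linear P" "\<forall>w\<in>W. P w = w" "\<forall>x. P x \<in> W"
        using proj_exists[OF sW] by blast
      have PT: "P \<circ> T = T" using P(2) unfolding W_def by auto
      have tr: "trace_op T = trace_op (T \<circ> P)" using trace_op_comm[OF P(1) lin] PT by simp
      define T' where "T' = T \<circ> P"
      have linT': "linear T'" unfolding T'_def by (rule linear_compose[OF P(1) lin])
      have pow: "(T' ^^ Suc k) x = (T ^^ Suc k) (P x)" for k x
      proof (induction k)
        case 0
        show ?case by (simp add: T'_def)
      next
        case (Suc k)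
        have inW: "(T ^^ Suc k) (P x) \<in> W" unfolding W_def by simp
        have "(T' ^^ Suc (Suc k)) x = T (P ((T' ^^ Suc k) x))" by (simp add: T'_def)
        also have "\<dots> = T ((T ^^ Suc k) (P x))" using Suc.IH P(2) inW by simp
        finally show ?case by simp
      qed
      have nil': "\<forall>x. (T' ^^ Suc m) x = 0"
        using pow nil linear_0[OF lin] by simp
      have PW: "range P = W" using P(2) P(3) by (auto intro: image_eqI[where x = w for w, OF sym])
      have "range T' = T ` range P" unfolding T'_def by (simp add: image_comp)
      then have rT': "range T' = T ` W" using PW by simp
      have sub: "T ` W \<subseteq> W" unfolding W_def by auto
      have sTW: "subspace (T ` W)" by (rule real_vector.linear_subspace_image[OF lin sW])
      have lt: "dim (T ` W) < d"
      proof (rule ccontr)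
        assume "\<not> ?thesis"
        then have "dim W \<le> dim (T ` W)" using dT W_def by simp
        then have eq: "T ` W = W" using subspace_dim_equal[OF sTW sW sub] by simp
        have rk: "range (T ^^ Suc k) = W" for k
        proof (induction k)
          case 0
          show ?case by (simp add: W_def)
        next
          case (Suc k)
          have "range (T ^^ Suc (Suc k)) = T ` range (T ^^ Suc k)"
            by (simp add: image_comp)
          then show ?case using Suc.IH eq by simp
        qed
        have "range (T ^^ Suc m) \<subseteq> {0}" using nil linear_0[OF lin] by auto
        then have "W \<subseteq> {0}" using rk[of m] by simp
        moreover have "T x0 \<in> W" unfolding W_def by simp
        ultimately show False using x0 by auto
      qed
      have "trace_op T' = 0" using less.IH[OF lt, of "Suc m"] linT' nil' rT' by auto
      with tr show ?thesis by (simp add: T'_def)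
    qed
  qed
qed

lemma trace_nilpotent:
  fixes T :: "real^'n\<Rightarrow>real^'n"
  assumes "linear T" "\<forall>x. (T ^^ m) x = 0"
  shows "trace_op T = 0"
  using trace_nilpotent_aux[of "dim (range T)" m] assms by blast

lemma trace_skew:
  fixes B :: "real^'n \<Rightarrow> real^'n \<Rightarrow> real" and A :: "real^'n \<Rightarrow> real^'n"
  assumes pe: "pseudo_euclidean B" and lA: "linear A" and sk: "\<And>x y. B (A x) y = - B x (A y)"
  shows "trace_op A = 0"
proof -
  have bil: "bilinear B" and sym: "\<And>x y. B x y = B y x" and nd: "\<And>x. (\<forall>y. B x y = 0) \<Longrightarrow> x = 0"
    using pe unfolding pseudo_euclidean_def by auto
  define e where "e i = (axis i 1 :: real^'n)" for i
  have expand: "x = (\<Sum>j\<in>UNIV. x $ j *\<^sub>R e j)" for x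
    using basis_expansion[of x] unfolding e_def scalar_mult_eq_scaleR by simp
  have linR: "linear (B z)" for z using bil unfolding bilinear_def by auto
  have linL: "linear (\<lambda>x. B x z)" for z using bil unfolding bilinear_def by auto
  have R: "B z (\<Sum>j\<in>UNIV. c j *\<^sub>R v j) = (\<Sum>j\<in>UNIV. c j * B z (v j))" for z c v
    by (simp add: linear_sum[OF linR] linear_cmul[OF linR])
  have L: "B (\<Sum>j\<in>UNIV. c j *\<^sub>R v j) z = (\<Sum>j\<in>UNIV. c j * B (v j) z)" for z c v
  proof -
    have "B (\<Sum>j\<in>UNIV. c j *\<^sub>R v j) z = (\<Sum>j\<in>UNIV. B (c j *\<^sub>R v j) z)"
      using linear_sum[OF linL[of z], of "\<lambda>j. c j *\<^sub>R v j" UNIV] by simp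
    also have "\<dots> = (\<Sum>j\<in>UNIV. c j * B (v j) z)"
      by (rule sum.cong[OF refl]) (simp add: bilinear_lmul[OF bil])
    finally show ?thesis .
  qed
  define phi where "phi y = (\<chi> i. B (e i) y)" for y
  have lphi: "linear phi"
    unfolding linear_iff phi_def
    by (simp add: vec_eq_iff bilinear_radd[OF bil] bilinear_rmul[OF bil])
  have iphi: "inj phi"
    unfolding linear_injective_0[OF lphi]
  proof (intro allI impI)
    fix y assume "phi y = 0"
    then have "B (e i) y = 0" for i unfolding phi_def by (simp add: vec_eq_iff)
    then have "B x y = 0" for x
    proof -
      assume h: "\<And>i. B (e i) y = 0"
      have "B x y = B (\<Sum>j\<in>UNIV. x $ j *\<^sub>R e j) y" using expand[of x] by simp
      also have "\<dots> = (\<Sum>j\<in>UNIV. x $ j * B (e j) y)" by (rule L)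
      finally show ?thesis using h by simp
    qed
    then show "y = 0" using nd sym by metis
  qed
  have sphi: "surj phi" using linear_injective_imp_surjective[OF lphi iphi] by simp
  define d where "d j = (SOME x. phi x = axis j 1)" for j
  have dphi: "phi (d j) = axis j 1" for j
    unfolding d_def by (rule someI_ex) (use sphi in \<open>metis surjD\<close>)
  have dd: "B (e i) (d j) = (if i = j then 1 else 0)" for i j
    using arg_cong[OF dphi[of j], of "\<lambda>v. v $ i"] unfolding phi_def by (simp add: axis_def)
  have coord: "x $ j = B (d j) x" for x j
  proof -
    have "B (d j) x = B (d j) (\<Sum>k\<in>UNIV. x $ k *\<^sub>R e k)" using expand[of x] by simp
    also have "\<dots> = (\<Sum>k\<in>UNIV. x $ k * B (d j) (e k))" by (rule R)
    also have "\<dots> = (\<Sum>k\<in>UNIV. x $ k * (if k = j then 1 else 0))"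
      by (simp add: sym[of "d j"] dd)
    also have "\<dots> = (\<Sum>k\<in>UNIV. if k = j then x $ k else 0)"
      by (rule sum.cong) auto
    finally show ?thesis by simp
  qed
  define G where "G i j = B (d i) (d j)" for i j
  define C where "C i j = B (e i) (A (e j))" for i j
  have Gsym: "G i j = G j i" for i j unfolding G_def by (rule sym)
  have dexp: "d i = (\<Sum>j\<in>UNIV. G j i *\<^sub>R e j)" for i
    using expand[of "d i"] unfolding G_def coord by simp
  have tr0: "trace_op A = (\<Sum>i\<in>UNIV. B (d i) (A (e i)))"
    unfolding trace_op_def e_def[symmetric] using coord by simp
  have t1: "B (d i) (A (e i)) = (\<Sum>j\<in>UNIV. G j i * C j i)" for i
  proof -
    have "B (d i) (A (e i)) = B (\<Sum>j\<in>UNIV. G j i *\<^sub>R e j) (A (e i))" using dexp[of i] by simp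
    also have "\<dots> = (\<Sum>j\<in>UNIV. G j i * C j i)" unfolding C_def by (rule L)
    finally show ?thesis .
  qed
  have t2: "B (d i) (A (e i)) = - (\<Sum>j\<in>UNIV. G j i * C i j)" for i
  proof -
    have "B (d i) (A (e i)) = - B (A (d i)) (e i)" using sk[of "d i" "e i"] by simp
    also have "B (A (d i)) (e i) = B (e i) (A (d i))" by (rule sym)
    also have "A (d i) = (\<Sum>j\<in>UNIV. G j i *\<^sub>R A (e j))"
      using dexp[of i] by (simp add: linear_sum[OF lA] linear_cmul[OF lA])
    also have "B (e i) \<dots> = (\<Sum>j\<in>UNIV. G j i * C i j)"
      unfolding C_def by (rule R)
    finally show ?thesis .
  qed
  have "(\<Sum>i\<in>UNIV. \<Sum>j\<in>UNIV. G j i * C i j) = (\<Sum>j\<in>UNIV. \<Sum>i\<in>UNIV. G j i * C i j)"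
    by (rule sum.swap)
  also have "\<dots> = (\<Sum>j\<in>UNIV. \<Sum>i\<in>UNIV. G i j * C i j)"
    by (simp add: Gsym)
  finally have sw: "(\<Sum>i\<in>UNIV. \<Sum>j\<in>UNIV. G j i * C i j) = (\<Sum>i\<in>UNIV. \<Sum>j\<in>UNIV. G j i * C j i)" .
  have "trace_op A = (\<Sum>i\<in>UNIV. \<Sum>j\<in>UNIV. G j i * C j i)" using tr0 t1 by simp
  moreover have "trace_op A = - (\<Sum>i\<in>UNIV. \<Sum>j\<in>UNIV. G j i * C j i)"
    using tr0 t2 sw by (simp add: sum_negf)
  ultimately show ?thesis by linarith
qed




lemma neg_mv: "(- A) *v x = - (A *v (x::real^'n))"
  by (simp add: matrix_vector_mult_def vec_eq_iff sum_negf)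

lemma funpow_comm_pt:
  assumes "\<And>x. g (f x) = f (g x)"
  shows "g ((f ^^ k) x) = (f ^^ k) (g x)"
  by (induction k) (simp_all add: assms)

lemma funpow_comp_comm:
  assumes "\<And>x. g (f x) = f (g x)"
  shows "((f \<circ> g) ^^ k) x = (f ^^ k) ((g ^^ k) x)"
proof (induction k arbitrary: x)
  case 0
  then show ?case by simp
next
  case (Suc k)
  have "((f \<circ> g) ^^ Suc k) x = f (g (((f \<circ> g) ^^ k) x))" by simp
  also have "\<dots> = f (g ((f ^^ k) ((g ^^ k) x)))" by (simp only: Suc.IH)
  also have "\<dots> = f ((f ^^ k) (g ((g ^^ k) x)))" by (simp only: funpow_comm_pt[of g f, OF assms])
  finally show ?case by (simp add: o_def)
qed

locale SS =
  fixes B :: "real^'n \<Rightarrow> real^'n \<Rightarrow> real"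
    and K :: "real^'n \<Rightarrow> real^'n \<Rightarrow> real^'n^'n"
    and Ric :: "real^'n \<Rightarrow> real^'n"
  assumes pe: "pseudo_euclidean B"
    and ct: "curvature_tensor B K"
    and ss: "semi_symmetric K"
    and ric: "is_ricci B K Ric"
begin

lemma Bbil: "bilinear B" using pe unfolding pseudo_euclidean_def by blast
lemma Bsym: "B x y = B y x" using pe unfolding pseudo_euclidean_def by blast
lemma Bnd: "(\<And>y. B x y = 0) \<Longrightarrow> x = 0" using pe unfolding pseudo_euclidean_def by blast
lemma Bext: "(\<And>y. B x y = B x' y) \<Longrightarrow> x = x'"
proof -
  assume h: "\<And>y. B x y = B x' y"
  have "B (x - x') y = 0" for y using h[of y] by (simp add: bilinear_lsub[OF Bbil])
  then have "x - x' = 0" by (rule Bnd)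
  then show ?thesis by simp
qed
lemma linBR: "linear (B z)" using Bbil unfolding bilinear_def by auto
lemma linBL: "linear (\<lambda>x. B x z)" using Bbil unfolding bilinear_def by auto

lemma Kbil: "bilinear K" using ct unfolding curvature_tensor_def by blast
lemma Kskew: "B (K u v *v x) y = - B x (K u v *v y)" using ct unfolding curvature_tensor_def by blast
lemma Kanti: "K u v = - K v u" using ct unfolding curvature_tensor_def by blast
lemma bianchi: "K u v *v w + K v w *v u + K w u *v v = 0" using ct unfolding curvature_tensor_def by blast
lemma pair: "B (K a b *v u) v = B (K u v *v a) b" using ct unfolding curvature_tensor_def by blast
lemma sem: "K u v ** K a b - K a b ** K u v = K (K u v *v a) b + K a (K u v *v b)"
  using ss unfolding semi_symmetric_def by blast
lemma Riclin: "linear Ric" using ric unfolding is_ricci_def by blast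
lemma Ricdef: "B (Ric u) v = trace_op (\<lambda>a. K u a *v v)" using ric unfolding is_ricci_def by blast

lemma K_anti_mv: "K a b *v x = - (K b a *v x)"
  using Kanti[of a b] by (simp add: neg_mv)

lemma K_self: "K a a = 0"
proof -
  have h: "K a a = - K a a" by (rule Kanti)
  have "K a a $ i $ j = 0" for i j using arg_cong[OF h, of "\<lambda>M. M $ i $ j"] by simp
  then show ?thesis by (simp add: vec_eq_iff)
qed

lemma linK1: "linear (\<lambda>a. K a v *v w)"
  unfolding linear_iff
  by (simp add: bilinear_ladd[OF Kbil] bilinear_lmul[OF Kbil] matrix_vector_mult_add_rdistrib
      scaleR_matrix_vector_assoc)

lemma linK2: "linear (\<lambda>a. K u a *v w)"
  unfolding linear_iff
  by (simp add: bilinear_radd[OF Kbil] bilinear_rmul[OF Kbil] matrix_vector_mult_add_rdistrib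
      scaleR_matrix_vector_assoc)

lemma linK3: "linear (\<lambda>w. K u v *v w)" by simp

lemma Ric_sym: "B (Ric u) v = B u (Ric v)"
proof -
  have eq: "(\<lambda>a. K u a *v v) = (\<lambda>a. K v a *v u - K v u *v a)"
  proof
    fix a
    have h: "K u a *v v + K a v *v u + K v u *v a = 0" by (rule bianchi)
    have "K u a *v v = (K u a *v v + K a v *v u + K v u *v a) - K a v *v u - K v u *v a" by simp
    also have "\<dots> = - (K a v *v u) - K v u *v a" using h by simp
    also have "K a v *v u = - (K v a *v u)" by (rule K_anti_mv)
    finally show "K u a *v v = K v a *v u - K v u *v a" by simp
  qed
  have tz: "trace_op (\<lambda>a. K v u *v a) = 0"
    by (rule trace_skew[OF pe linK3]) (rule Kskew)
  have "B (Ric u) v = trace_op (\<lambda>a. K v a *v u) - trace_op (\<lambda>a. K v u *v a)"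
    unfolding Ricdef eq by (rule trace_op_diff)
  also have "\<dots> = B (Ric v) u" using tz by (simp add: Ricdef)
  finally show ?thesis by (simp add: Bsym)
qed

lemma Ric_comm: "Ric (K u v *v w) = K u v *v Ric w"
proof (rule Bext)
  fix y
  define A where "A = K u v"
  define M where "M a = K w a *v y" for a
  have linM: "linear M" unfolding M_def by (rule linK2)
  have linA: "linear ((*v) A)" by simp
  have e: "K (A *v w) a *v y = A *v M a - K w a *v (A *v y) - M (A *v a)" for a
  proof -
    have "K (A *v w) a = A ** K w a - K w a ** A - K w (A *v a)"
      using sem[of u v w a] unfolding A_def by (simp add: algebra_simps)
    then show ?thesis unfolding M_def
      by (simp add: matrix_vector_mult_diff_rdistrib matrix_vector_mul_assoc)
  qed
  have "B (Ric (A *v w)) y = trace_op (\<lambda>a. K (A *v w) a *v y)" by (rule Ricdef)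
  also have "\<dots> = trace_op (\<lambda>a. A *v M a) - trace_op (\<lambda>a. K w a *v (A *v y)) - trace_op (\<lambda>a. M (A *v a))"
    unfolding e by (simp add: trace_op_diff)
  also have "trace_op (\<lambda>a. A *v M a) = trace_op (\<lambda>a. M (A *v a))"
    using trace_op_comm[OF linA linM] by (simp add: o_def)
  also have "trace_op (\<lambda>a. K w a *v (A *v y)) = B (Ric w) (A *v y)" by (rule Ricdef[symmetric])
  also have "B (Ric w) (A *v y) = - B (A *v Ric w) y" unfolding A_def using Kskew[of u v "Ric w" y] by simp
  finally show "B (Ric (K u v *v w)) y = B (K u v *v Ric w) y" unfolding A_def by simp
qed

abbreviation S where "S p \<equiv> poly_op p Ric"

lemma linS: "linear (S p)" by (rule linear_poly_op[OF Riclin])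

lemma S_commK: "S p (K u v *v w) = K u v *v S p w"
  using poly_op_commute[OF Riclin linK3, of u v p w] Ric_comm by metis

lemma S_commRic: "S p (Ric x) = Ric (S p x)"
  using poly_op_commute[OF Riclin Riclin, of p x] by metis

lemma S_sym: "B (S p x) y = B x (S p y)"
proof (induction p arbitrary: x y rule: pCons_induct)
  case 0
  then show ?case by (simp add: bilinear_lzero[OF Bbil] bilinear_rzero[OF Bbil])
next
  case (pCons a p)
  have "B (S (pCons a p) x) y = a * B x y + B (Ric (S p x)) y"
    by (simp add: poly_op_pCons[OF Riclin] bilinear_ladd[OF Bbil] bilinear_lmul[OF Bbil])
  also have "B (Ric (S p x)) y = B x (S p (Ric y))" using Ric_sym pCons.IH by simp
  also have "S p (Ric y) = Ric (S p y)" by (rule S_commRic)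
  also have "a * B x y + B x (Ric (S p y)) = B x (S (pCons a p) y)"
    by (simp add: poly_op_pCons[OF Riclin] bilinear_radd[OF Bbil] bilinear_rmul[OF Bbil])
  finally show ?case .
qed

lemma K_S: "K (S p x) y = K x (S p y)"
proof -
  have "K (S p x) y *v a = K x (S p y) *v a" for a
  proof (rule Bext)
    fix b
    have "B (K (S p x) y *v a) b = B (K a b *v S p x) y" by (rule pair[symmetric])
    also have "\<dots> = B (S p (K a b *v x)) y" by (simp add: S_commK)
    also have "\<dots> = B (K a b *v x) (S p y)" by (rule S_sym)
    also have "\<dots> = B (K x (S p y) *v a) b" by (rule pair)
    finally show "B (K (S p x) y *v a) b = B (K x (S p y) *v a) b" .
  qed
  then show ?thesis by (simp add: matrix_eq)
qed

lemma K_S2: "K (S p x) y *v w = S p (K x y *v w)"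
proof -
  define u v where "u = x" and "v = y"
  define a where "a = K (S p u) v *v w"
  define b where "b = K (S p v) w *v u"
  define c where "c = K (S p w) u *v v"
  define p' where "p' = K u v *v S p w"
  define q where "q = K v w *v S p u"
  define r where "r = K w u *v S p v"
  have e1: "p' + b + c = 0"
    using bianchi[of u v "S p w"] unfolding p'_def b_def c_def by (simp add: K_S)
  have e2: "a + q + c = 0"
    using bianchi[of "S p u" v w] unfolding a_def q_def c_def by (simp add: K_S)
  have e3: "a + b + r = 0"
    using bianchi[of u "S p v" w] unfolding a_def b_def r_def by (simp add: K_S)
  have e4: "p' + q + r = 0"
  proof -
    have "S p (K u v *v w + K v w *v u + K w u *v v) = 0" by (simp add: bianchi linear_0[OF linS])
    then show ?thesis unfolding p'_def q_def r_def
      by (simp add: linear_add[OF linS] S_commK)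
  qed
  have "2 *\<^sub>R (a + b + c) = (p' + b + c) + (a + q + c) + (a + b + r) - (p' + q + r)"
    by (simp add: algebra_simps scaleR_2)
  then have "a + b + c = 0" using e1 e2 e3 e4 by simp
  then have "a = - (b + c)" by (simp only: eq_neg_iff_add_eq_0 add.assoc)
  moreover have "p' = - (b + c)" using e1 by (simp only: eq_neg_iff_add_eq_0 add.assoc)
  ultimately have "a = p'" by simp
  then show ?thesis unfolding a_def p'_def u_def v_def by (simp add: S_commK)
qed

lemma nil_lemma:
  assumes "\<forall>z. S (q ^ k) z = 0"
  shows "Ric (S q x) = 0"
proof (rule Bnd)
  fix y
  define M where "M a = K x a *v y" for a
  have linM: "linear M" unfolding M_def by (rule linK2)
  have cm: "M (S q a) = S q (M a)" for a
    unfolding M_def using K_S2[of q x a y] K_S[of q x a] by simp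
  have eqf: "(\<lambda>a. K (S q x) a *v y) = S q \<circ> M"
    unfolding M_def by (auto simp: K_S2)
  have lin2: "linear (S q \<circ> M)" by (rule linear_compose[OF linM linS])
  have nil: "\<forall>z. ((S q \<circ> M) ^^ k) z = 0"
  proof
    fix z
    have "((S q \<circ> M) ^^ k) z = (S q ^^ k) ((M ^^ k) z)"
      by (rule funpow_comp_comm) (rule cm)
    also have "\<dots> = S (q ^ k) ((M ^^ k) z)" by (simp add: poly_op_power[OF Riclin])
    finally show "((S q \<circ> M) ^^ k) z = 0" using assms by simp
  qed
  have "B (Ric (S q x)) y = trace_op (S q \<circ> M)" unfolding Ricdef eqf ..
  also have "\<dots> = 0" by (rule trace_nilpotent[OF lin2 nil])
  finally show "B (Ric (S q x)) y = 0" .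
qed

end




lemma bezout_poly:
  fixes p q :: "real poly"
  assumes "coprime p q"
  obtains u v where "u * p + v * q = 1"
proof -
  have "fst (bezout_coefficients p q) * p + snd (bezout_coefficients p q) * q = 1"
    using bezout_coefficients_fst_snd[of p q] coprime_imp_gcd_eq_1[OF assms] by simp
  then show ?thesis using that by blast
qed

lemma poly_op_dvd_vec:
  assumes "linear f" "poly_op p f x = 0" "p dvd q"
  shows "poly_op q f x = 0"
proof -
  from assms(3) obtain r where "q = p * r" by (erule dvdE)
  then have "q = r * p" by (simp add: mult.commute)
  then show ?thesis using assms by (simp add: poly_op_mult)
qed

lemma kernel_coprime:
  fixes f :: "real^'n \<Rightarrow> real^'n"
  assumes lf: "linear f" and cp: "coprime p q" and hp: "poly_op p f x = 0" and hq: "poly_op q f x = 0"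
  shows "x = 0"
proof -
  obtain u v where uv: "u * p + v * q = 1" using bezout_poly[OF cp] by blast
  have "x = poly_op (u * p + v * q) f x" using uv by simp
  also have "\<dots> = 0" by (simp add: poly_op_add poly_op_mult[OF lf] hp hq lf)
  finally show ?thesis .
qed

lemma decomp_exists:
  fixes f :: "real^'n \<Rightarrow> real^'n" and g :: "'i \<Rightarrow> real poly"
  assumes lf: "linear f" and fin: "finite I"
  shows "(\<forall>i\<in>I. \<forall>j\<in>I. i \<noteq> j \<longrightarrow> coprime (g i) (g j)) \<Longrightarrow> poly_op (\<Prod>i\<in>I. g i) f x = 0
    \<Longrightarrow> \<exists>c. (\<forall>i\<in>I. poly_op (g i) f (c i) = 0) \<and> x = (\<Sum>i\<in>I. c i)"
  using fin
proof (induction I arbitrary: x rule: finite_induct)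
  case empty
  then show ?case by simp
next
  case (insert j I)
  define h where "h = (\<Prod>i\<in>I. g i)"
  have cpI: "\<forall>i\<in>I. \<forall>k\<in>I. i \<noteq> k \<longrightarrow> coprime (g i) (g k)" using insert.prems(1) by blast
  have cph: "coprime (g j) h" unfolding h_def
    using insert.prems(1) insert.hyps(2) by (intro prod_coprime_right) auto
  obtain u v where uv: "u * g j + v * h = 1" using bezout_poly[OF cph] by blast
  have prodx: "poly_op (g j * h) f x = 0" using insert.prems(2) insert.hyps unfolding h_def by simp
  define x1 where "x1 = poly_op (v * h) f x"
  define x2 where "x2 = poly_op (u * g j) f x"
  have k1: "poly_op (g j) f x1 = 0"
  proof -
    have "poly_op (g j) f x1 = poly_op (v * (g j * h)) f x"
      unfolding x1_def by (simp add: poly_op_mult[OF lf, symmetric] ac_simps)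
    also have "\<dots> = 0" using prodx by (simp add: poly_op_mult[OF lf] lf)
    finally show ?thesis .
  qed
  have k2: "poly_op (\<Prod>i\<in>I. g i) f x2 = 0"
  proof -
    have "poly_op h f x2 = poly_op (u * (g j * h)) f x"
      unfolding x2_def by (simp add: poly_op_mult[OF lf, symmetric] ac_simps)
    also have "\<dots> = 0" using prodx by (simp add: poly_op_mult[OF lf] lf)
    finally show ?thesis unfolding h_def .
  qed
  obtain c where c: "\<forall>i\<in>I. poly_op (g i) f (c i) = 0" "x2 = (\<Sum>i\<in>I. c i)"
    using insert.IH[OF cpI k2] by blast
  have xsum: "x = x2 + x1"
  proof -
    have "x = poly_op (u * g j + v * h) f x" using uv by simp
    then show ?thesis unfolding x1_def x2_def by (simp add: poly_op_add)
  qed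
  define c' where "c' = c(j := x1)"
  have "(\<Sum>i\<in>insert j I. c' i) = c' j + (\<Sum>i\<in>I. c' i)" using insert.hyps by simp
  also have "(\<Sum>i\<in>I. c' i) = (\<Sum>i\<in>I. c i)" unfolding c'_def using insert.hyps by (intro sum.cong) auto
  finally have "(\<Sum>i\<in>insert j I. c' i) = x" using xsum c(2) by (simp add: c'_def add.commute)
  moreover have "\<forall>i\<in>insert j I. poly_op (g i) f (c' i) = 0"
    using c(1) k1 insert.hyps unfolding c'_def by auto
  ultimately show ?case by metis
qed

lemma decomp_unique:
  fixes f :: "real^'n \<Rightarrow> real^'n" and g :: "'i \<Rightarrow> real poly"
  assumes lf: "linear f" and fin: "finite I"
    and cp: "\<forall>i\<in>I. \<forall>j\<in>I. i \<noteq> j \<longrightarrow> coprime (g i) (g j)"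
    and kc: "\<forall>i\<in>I. poly_op (g i) f (c i) = 0"
    and sc: "(\<Sum>i\<in>I. c i) = 0"
  shows "\<forall>i\<in>I. c i = 0"
proof
  fix i assume iI: "i \<in> I"
  define h where "h = (\<Prod>l\<in>I - {i}. g l)"
  have cph: "coprime (g i) h" unfolding h_def
    using cp iI by (intro prod_coprime_right) auto
  have hz: "poly_op h f (c l) = 0" if "l \<in> I - {i}" for l
  proof (rule poly_op_dvd_vec[OF lf])
    show "poly_op (g l) f (c l) = 0" using kc that by auto
    show "g l dvd h" unfolding h_def using fin that by (intro dvd_prodI) auto
  qed
  have "0 = poly_op h f (\<Sum>l\<in>I. c l)" using sc lf by simp
  also have "\<dots> = (\<Sum>l\<in>I. poly_op h f (c l))" by (rule linear_sum[OF linear_poly_op[OF lf]])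
  also have "\<dots> = poly_op h f (c i) + (\<Sum>l\<in>I - {i}. poly_op h f (c l))"
    using fin iI by (simp add: sum.remove)
  also have "(\<Sum>l\<in>I - {i}. poly_op h f (c l)) = 0" using hz by simp
  finally have "poly_op h f (c i) = 0" by simp
  then show "c i = 0" using kernel_coprime[OF lf cph] kc iI by blast
qed

lemma matrix_add_rdistrib': "((A + B) ** C) = (A ** C) + (B ** (C :: real^'n^'n))"
  by (simp add: matrix_matrix_mult_def vec_eq_iff algebra_simps sum.distrib)

lemma br_add_r: "A ** (x + y) - (x + y) ** A = (A ** x - x ** A) + (A ** y - y ** (A::real^'n^'n))"
  by (simp add: matrix_add_ldistrib matrix_add_rdistrib' algebra_simps)
lemma br_add_l: "(x + y) ** C - C ** (x + y) = (x ** C - C ** x) + (y ** C - C ** (y::real^'n^'n))"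
  by (simp add: matrix_add_ldistrib matrix_add_rdistrib' algebra_simps)
lemma br_scale_r: "A ** (c *\<^sub>R x) - (c *\<^sub>R x) ** A = c *\<^sub>R (A ** x - x ** (A::real^'n^'n))"
  by (simp add: matrix_scalar_ac scalar_matrix_assoc[symmetric] scaleR_diff_right)
lemma br_scale_l: "(c *\<^sub>R x) ** C - C ** (c *\<^sub>R x) = c *\<^sub>R (x ** C - C ** (x::real^'n^'n))"
  by (simp add: matrix_scalar_ac scalar_matrix_assoc[symmetric] scaleR_diff_right)

context SS
begin

lemma orth_coprime:
  assumes cp: "coprime p q" and hx: "S p x = 0" and hy: "S q y = 0"
  shows "B x y = 0"
proof -
  obtain u v where uv: "u * p + v * q = 1" using bezout_poly[OF cp] by blast
  have "x = S (u * p + v * q) x" using uv by simp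
  also have "\<dots> = S (v * q) x" by (simp add: poly_op_add poly_op_mult[OF Riclin] hx Riclin)
  finally have "B x y = B (S (v * q) x) y" by simp
  also have "\<dots> = B x (S (v * q) y)" by (rule S_sym)
  also have "\<dots> = 0" by (simp add: poly_op_mult[OF Riclin] hy Riclin bilinear_rzero[OF Bbil])
  finally show ?thesis .
qed

lemma ker_inv:
  assumes "S p x = 0"
  shows "S p (K u v *v x) = 0"
  using assms by (simp add: S_commK)

definition decomp :: "'i set \<Rightarrow> ('i \<Rightarrow> (real^'n) set) \<Rightarrow> bool" where
  "decomp I E \<longleftrightarrow> finite I
     \<and> (\<forall>v. \<exists>c. (\<forall>i\<in>I. c i \<in> E i) \<and> v = (\<Sum>i\<in>I. c i))
     \<and> (\<forall>c. (\<forall>i\<in>I. c i \<in> E i) \<and> (\<Sum>i\<in>I. c i) = 0 \<longrightarrow> (\<forall>i\<in>I. c i = 0))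
     \<and> (\<forall>i\<in>I. \<forall>j\<in>I. i \<noteq> j \<longrightarrow> (\<forall>x\<in>E i. \<forall>y\<in>E j. B x y = 0))
     \<and> (\<forall>i\<in>I. \<forall>u v x. x \<in> E i \<longrightarrow> K u v *v x \<in> E i)
     \<and> (\<forall>i\<in>I. subspace (E i))"

lemma decomp_fin: "decomp I E \<Longrightarrow> finite I"
  unfolding decomp_def by (elim conjE)

lemma decomp_ex:
  assumes "decomp I E"
  shows "\<exists>c. (\<forall>i\<in>I. c i \<in> E i) \<and> v = (\<Sum>i\<in>I. c i)"
proof -
  have "\<forall>v. \<exists>c. (\<forall>i\<in>I. c i \<in> E i) \<and> v = (\<Sum>i\<in>I. c i)"
    using assms unfolding decomp_def by (elim conjE)
  then show ?thesis by (rule spec)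
qed

lemma decomp_uni:
  assumes "decomp I E" "\<forall>i\<in>I. c i \<in> E i" "(\<Sum>i\<in>I. c i) = 0" "i \<in> I"
  shows "c i = 0"
proof -
  have "\<forall>c. (\<forall>i\<in>I. c i \<in> E i) \<and> (\<Sum>i\<in>I. c i) = 0 \<longrightarrow> (\<forall>i\<in>I. c i = 0)"
    using assms(1) unfolding decomp_def by (elim conjE)
  then show ?thesis using assms(2-4) by blast
qed

lemma decomp_orth:
  assumes "decomp I E" "i \<in> I" "j \<in> I" "i \<noteq> j" "x \<in> E i" "y \<in> E j"
  shows "B x y = 0"
proof -
  have "\<forall>i\<in>I. \<forall>j\<in>I. i \<noteq> j \<longrightarrow> (\<forall>x\<in>E i. \<forall>y\<in>E j. B x y = 0)"
    using assms(1) unfolding decomp_def by (elim conjE)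
  then show ?thesis using assms(2-6) by blast
qed

lemma decomp_inv:
  assumes "decomp I E" "i \<in> I" "x \<in> E i"
  shows "K u v *v x \<in> E i"
proof -
  have "\<forall>i\<in>I. \<forall>u v x. x \<in> E i \<longrightarrow> K u v *v x \<in> E i"
    using assms(1) unfolding decomp_def by (elim conjE)
  then show ?thesis using assms(2-3) by blast
qed

lemma decomp_sub:
  assumes "decomp I E" "i \<in> I"
  shows "subspace (E i)"
proof -
  have "\<forall>i\<in>I. subspace (E i)"
    using assms(1) unfolding decomp_def by (elim conjE)
  then show ?thesis using assms(2) by blast
qed

lemma cross_zero_aux:
  assumes D: "decomp I E" and i: "i \<in> I" and j: "j \<in> I" and ij: "i \<noteq> j"
    and u: "u \<in> E i" and v: "v \<in> E j" and w: "w \<in> E i"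
  shows "K u v *v w = 0"
proof (rule Bnd)
  fix z
  obtain c where c: "\<forall>l\<in>I. c l \<in> E l" "z = (\<Sum>l\<in>I. c l)" using decomp_ex[OF D, of z] by blast
  have t: "B (K u v *v w) (c l) = 0" if l: "l \<in> I" for l
  proof (cases "l = i")
    case True
    have "B (K u v *v w) (c l) = B (K w (c l) *v u) v" by (rule pair)
    also have "\<dots> = 0" by (rule decomp_orth[OF D i j ij decomp_inv[OF D i u] v])
    finally show ?thesis .
  next
    case False
    then have il: "i \<noteq> l" by simp
    have cl: "c l \<in> E l" using c(1) l by blast
    show ?thesis by (rule decomp_orth[OF D i l il decomp_inv[OF D i w] cl])
  qed
  have "B (K u v *v w) z = (\<Sum>l\<in>I. B (K u v *v w) (c l))"
    unfolding c(2) by (rule linear_sum[OF linBR])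
  also have "\<dots> = 0" using t by simp
  finally show "B (K u v *v w) z = 0" .
qed

lemma cross_zero:
  assumes D: "decomp I E" and i: "i \<in> I" and j: "j \<in> I" and ij: "i \<noteq> j"
    and u: "u \<in> E i" and v: "v \<in> E j"
  shows "K u v = 0"
proof -
  have fin: "finite I" by (rule decomp_fin[OF D])
  have comp: "K u v *v w = 0" if k: "k \<in> I" and w: "w \<in> E k" for k w
  proof -
    consider "k = i" | "k = j" | "k \<noteq> i" "k \<noteq> j" by blast
    then show ?thesis
    proof cases
      case 1
      then show ?thesis using cross_zero_aux[OF D i j ij u v] w by simp
    next
      case 2
      have "K v u *v w = 0" using cross_zero_aux[OF D j i ij[symmetric] v u] w 2 by simp
      then show ?thesis by (simp add: K_anti_mv[of u v w])
    next
      case 3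
      define a where "a = K u v *v w"
      define b where "b = K v w *v u"
      define d where "d = K w u *v v"
      define c where "c l = (if l = k then a else 0) + (if l = i then b else 0) + (if l = j then d else 0)" for l
      have aE: "a \<in> E k" unfolding a_def by (rule decomp_inv[OF D k w])
      have bE: "b \<in> E i" unfolding b_def by (rule decomp_inv[OF D i u])
      have dE: "d \<in> E j" unfolding d_def by (rule decomp_inv[OF D j v])
      have cE: "\<forall>l\<in>I. c l \<in> E l"
      proof
        fix l assume l: "l \<in> I"
        have z: "0 \<in> E l" using subspace_0[OF decomp_sub[OF D l]] .
        consider "l = k" | "l = i" | "l = j" | "l \<noteq> k" "l \<noteq> i" "l \<noteq> j" by blast
        then show "c l \<in> E l"
        proof cases
          case 1 then show ?thesis using 3 aE unfolding c_def by simp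
        next
          case 2 then show ?thesis using 3 bE ij unfolding c_def by simp
        next
          case 3 then show ?thesis using \<open>k \<noteq> j\<close> dE ij unfolding c_def by simp
        next
          case 4 then show ?thesis using z unfolding c_def by simp
        qed
      qed
      have "(\<Sum>l\<in>I. c l) = (\<Sum>l\<in>I. if l = k then a else 0) + (\<Sum>l\<in>I. if l = i then b else 0)
          + (\<Sum>l\<in>I. if l = j then d else 0)"
        unfolding c_def by (simp only: sum.distrib)
      also have "\<dots> = a + b + d" using fin k i j by simp
      also have "\<dots> = 0" unfolding a_def b_def d_def by (rule bianchi)
      finally have "c k = 0" by (rule decomp_uni[OF D cE _ k])
      then show ?thesis using 3 unfolding c_def a_def by simp
    qed
  qed
  have "K u v *v w = 0" for w
  proof -
    obtain c where c: "\<forall>l\<in>I. c l \<in> E l" "w = (\<Sum>l\<in>I. c l)" using decomp_ex[OF D, of w] by blast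
    have "K u v *v w = (\<Sum>l\<in>I. K u v *v c l)" unfolding c(2) by (rule linear_sum[OF linK3])
    also have "\<dots> = 0" using comp c(1) by simp
    finally show ?thesis .
  qed
  then show ?thesis by (simp add: matrix_eq)
qed

lemma hol_alg_decomp:
  assumes D: "decomp I E"
  shows "hol_alg K UNIV = {(\<Sum>i\<in>I. c i) | c. \<forall>i\<in>I. c i \<in> hol_alg K (E i)}"
proof
  have fin: "finite I" by (rule decomp_fin[OF D])
  define R where "R = {(\<Sum>i\<in>I. c i) | c. \<forall>i\<in>I. c i \<in> hol_alg K (E i)}"
  have sR: "subspace R"
    unfolding subspace_def
  proof (intro conjI ballI allI)
    show "0 \<in> R" unfolding R_def hol_alg_def
      by (rule CollectI, rule exI[of _ "\<lambda>_. 0"]) (simp add: span_zero)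
  next
    fix x y assume "x \<in> R" "y \<in> R"
    then obtain c d where c: "x = (\<Sum>i\<in>I. c i)" "\<forall>i\<in>I. c i \<in> hol_alg K (E i)"
      and d: "y = (\<Sum>i\<in>I. d i)" "\<forall>i\<in>I. d i \<in> hol_alg K (E i)" unfolding R_def by blast
    have "x + y = (\<Sum>i\<in>I. c i + d i)" using c d by (simp add: sum.distrib)
    moreover have "\<forall>i\<in>I. c i + d i \<in> hol_alg K (E i)" using c d unfolding hol_alg_def by (simp add: span_add)
    ultimately show "x + y \<in> R" unfolding R_def by blast
  next
    fix a x assume "x \<in> R"
    then obtain c where c: "x = (\<Sum>i\<in>I. c i)" "\<forall>i\<in>I. c i \<in> hol_alg K (E i)" unfolding R_def by blast
    have "a *\<^sub>R x = (\<Sum>i\<in>I. a *\<^sub>R c i)" using c by (simp add: scaleR_sum_right)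
    moreover have "\<forall>i\<in>I. a *\<^sub>R c i \<in> hol_alg K (E i)" using c unfolding hol_alg_def by (simp add: span_scale)
    ultimately show "a *\<^sub>R x \<in> R" unfolding R_def by blast
  qed
  have gen: "K x y \<in> R" for x y
  proof -
    obtain a where a: "\<forall>l\<in>I. a l \<in> E l" "x = (\<Sum>l\<in>I. a l)" using decomp_ex[OF D, of x] by blast
    obtain b where b: "\<forall>l\<in>I. b l \<in> E l" "y = (\<Sum>l\<in>I. b l)" using decomp_ex[OF D, of y] by blast
    have "K x y = (\<Sum>(i, j)\<in>I \<times> I. K (a i) (b j))" unfolding a(2) b(2) by (rule bilinear_sum[OF Kbil])
    also have "\<dots> = (\<Sum>i\<in>I. \<Sum>j\<in>I. K (a i) (b j))" by (rule sum.cartesian_product[symmetric])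
    also have "\<dots> = (\<Sum>i\<in>I. K (a i) (b i))"
    proof (rule sum.cong[OF refl])
      fix i assume i: "i \<in> I"
      have "(\<Sum>j\<in>I. K (a i) (b j)) = (\<Sum>j\<in>I. if j = i then K (a i) (b i) else 0)"
        using cross_zero[OF D i] a(1) b(1) i by (intro sum.cong) auto
      also have "\<dots> = K (a i) (b i)" using fin i by simp
      finally show "(\<Sum>j\<in>I. K (a i) (b j)) = K (a i) (b i)" .
    qed
    finally have "K x y = (\<Sum>i\<in>I. K (a i) (b i))" .
    moreover have "\<forall>i\<in>I. K (a i) (b i) \<in> hol_alg K (E i)"
      unfolding hol_alg_def
    proof (intro ballI span_base)
      fix i assume "i \<in> I"
      then show "K (a i) (b i) \<in> {K x y |x y. x \<in> E i \<and> y \<in> E i}" using a(1) b(1) by blast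
    qed
    ultimately show ?thesis unfolding R_def by blast
  qed
  show "hol_alg K UNIV \<subseteq> R" unfolding hol_alg_def
    by (rule span_minimal) (use gen sR in auto)
  show "R \<subseteq> hol_alg K UNIV"
  proof
    fix z assume "z \<in> R"
    then obtain c where c: "z = (\<Sum>i\<in>I. c i)" "\<forall>i\<in>I. c i \<in> hol_alg K (E i)" unfolding R_def by blast
    have "c i \<in> hol_alg K UNIV" if "i \<in> I" for i
    proof -
      have "hol_alg K (E i) \<subseteq> hol_alg K UNIV" unfolding hol_alg_def by (rule span_mono) auto
      then show ?thesis using c(2) that by blast
    qed
    then show "z \<in> hol_alg K UNIV" unfolding c(1) hol_alg_def by (intro span_sum) auto
  qed
qed

lemma lie_sub:
  assumes inv: "\<forall>u v x. x \<in> E \<longrightarrow> K u v *v x \<in> E"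
  shows "lie_subalgebra (hol_alg K E)"
proof -
  define G where "G = {K x y | x y. x \<in> E \<and> y \<in> E}"
  have gg: "A ** C - C ** A \<in> span G" if "A \<in> G" "C \<in> G" for A C
  proof -
    from that obtain x y a b where A: "A = K x y" "x \<in> E" "y \<in> E" and C: "C = K a b" "a \<in> E" "b \<in> E"
      unfolding G_def by blast
    have "A ** C - C ** A = K (K x y *v a) b + K a (K x y *v b)" unfolding A C by (rule sem)
    moreover have "K (K x y *v a) b \<in> G" "K a (K x y *v b) \<in> G"
      unfolding G_def using inv A C by blast+
    ultimately show ?thesis by (simp add: span_add span_base)
  qed
  have sub1: "subspace {C. A ** C - C ** A \<in> span G}" for A
  proof -
    have "0 \<in> {C. A ** C - C ** A \<in> span G}" by (simp add: span_zero)
    moreover have "x + y \<in> {C. A ** C - C ** A \<in> span G}"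
      if "x \<in> {C. A ** C - C ** A \<in> span G}" "y \<in> {C. A ** C - C ** A \<in> span G}" for x y
      using span_add[of "A ** x - x ** A" G "A ** y - y ** A"] that by (simp add: br_add_r)
    moreover have "c *\<^sub>R x \<in> {C. A ** C - C ** A \<in> span G}"
      if "x \<in> {C. A ** C - C ** A \<in> span G}" for c x
      using span_scale[of "A ** x - x ** A" G c] that by (simp add: br_scale_r)
    ultimately show ?thesis unfolding subspace_def by blast
  qed
  have g1: "A ** C - C ** A \<in> span G" if "A \<in> G" "C \<in> span G" for A C
    using span_induct[OF that(2) sub1[of A]] gg that(1) by blast
  have sub2: "subspace {A. \<forall>C\<in>span G. A ** C - C ** A \<in> span G}"
  proof -
    let ?T = "{A. \<forall>C\<in>span G. A ** C - C ** A \<in> span G}"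
    have "0 \<in> ?T" by (simp add: span_zero)
    moreover have "x + y \<in> ?T" if "x \<in> ?T" "y \<in> ?T" for x y
    proof -
      have "(x + y) ** C - C ** (x + y) \<in> span G" if C: "C \<in> span G" for C
        using span_add[of "x ** C - C ** x" G "y ** C - C ** y"] \<open>x \<in> ?T\<close> \<open>y \<in> ?T\<close> C
        by (simp add: br_add_l)
      then show ?thesis by simp
    qed
    moreover have "c *\<^sub>R x \<in> ?T" if "x \<in> ?T" for c x
    proof -
      have "(c *\<^sub>R x) ** C - C ** (c *\<^sub>R x) \<in> span G" if C: "C \<in> span G" for C
        using span_scale[of "x ** C - C ** x" G c] \<open>x \<in> ?T\<close> C by (simp add: br_scale_l)
      then show ?thesis by simp
    qed
    ultimately show ?thesis unfolding subspace_def by blast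
  qed
  have g2: "\<forall>C\<in>span G. A ** C - C ** A \<in> span G" if "A \<in> span G" for A
    using span_induct[OF that sub2] g1 by blast
  show ?thesis unfolding lie_subalgebra_def hol_alg_def G_def[symmetric]
    using g2 subspace_span by blast
qed

end




abbreviation Xp :: "real poly" where "Xp \<equiv> [:0,1:]"

lemma X2_eq: "Xp ^ 2 = [:0,0,1:]" by (simp add: power2_eq_square)

lemma prime_X: "prime Xp"
proof -
  have "prime_elem Xp" by (rule prime_elem_linear_field_poly) simp
  moreover have "normalize Xp = Xp" by (rule monic_normalize_eq) simp
  ultimately show ?thesis by (simp add: prime_def)
qed

lemma prime_lc:
  fixes p :: "real poly"
  assumes "prime p"
  shows "lead_coeff p = 1"
proof -
  have np: "normalize p = p" using assms by (rule normalize_prime)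
  have nz: "p \<noteq> 0" using assms by auto
  have "unit_factor p * normalize p = p" by (rule unit_factor_mult_normalize)
  then have "smult (lead_coeff p) p = p" using np by (simp add: unit_factor_poly_def)
  then have "lead_coeff (smult (lead_coeff p) p) = lead_coeff p" by (simp only:)
  then have h: "lead_coeff p * lead_coeff p = lead_coeff p * 1" by (simp only: lead_coeff_smult mult_1_right)
  moreover have "lead_coeff p \<noteq> 0" using nz by simp
  ultimately show ?thesis using mult_left_cancel by blast
qed

lemma subspace_ker:
  assumes "linear f"
  shows "subspace {x. f x = 0}"
  unfolding subspace_def using assms by (simp add: linear_0 linear_add linear_cmul)

context SS
begin

abbreviation chi where "chi \<equiv> min_poly Ric"

lemma chi_ism: "is_min_poly Ric chi" by (rule min_poly_works[OF Riclin])
lemma chi_lc: "lead_coeff chi = 1" using chi_ism unfolding is_min_poly_def by blast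
lemma chi_nz: "chi \<noteq> 0" using chi_lc by auto
lemma chi_ann: "S chi x = 0" using chi_ism unfolding is_min_poly_def by blast
lemma chi_min: "(\<And>x. S q x = 0) \<Longrightarrow> chi dvd q" using chi_ism unfolding is_min_poly_def by blast

abbreviation PF where "PF \<equiv> prime_factors chi"

lemma PF_fin: "finite PF" by simp

lemma chi_prod: "chi = (\<Prod>p\<in>PF. p ^ multiplicity p chi)"
  using prod_prime_factors[OF chi_nz] monic_normalize_eq[OF chi_lc] by simp

lemma mult_bound:
  assumes p: "prime p"
  shows "multiplicity p chi \<le> (if p = Xp then 1 else 0) + (if p \<in> PF then 1 else 0)"
proof -
  define q where "q = (\<Prod>p\<in>PF. p)"
  define k where "k = (\<Sum>p\<in>PF. multiplicity p chi)"
  have qpow: "q ^ k = (\<Prod>p\<in>PF. p ^ k)" unfolding q_def by (rule prod_power_distrib)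
  have "chi dvd q ^ k"
  proof -
    have "(\<Prod>p\<in>PF. p ^ multiplicity p chi) dvd (\<Prod>p\<in>PF. p ^ k)"
    proof (rule prod_dvd_prod)
      fix p assume "p \<in> PF"
      then have "multiplicity p chi \<le> k" unfolding k_def by (intro member_le_sum) auto
      then show "p ^ multiplicity p chi dvd p ^ k" by (rule le_imp_power_dvd)
    qed
    then show ?thesis using chi_prod qpow by simp
  qed
  then have "\<forall>z. S (q ^ k) z = 0" using poly_op_ann_dvd[OF Riclin] chi_ann by blast
  then have "Ric (S q x) = 0" for x by (rule nil_lemma)
  then have "S (Xp * q) x = 0" for x
    using poly_op_mult[OF Riclin, of Xp q x] poly_op_X[OF Riclin, of "S q x"] by simp
  then have dv: "chi dvd Xp * q" by (rule chi_min)
  have qnz: "q \<noteq> 0" unfolding q_def by (auto simp: in_prime_factors_iff)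
  have Xnz: "Xp \<noteq> 0" by simp
  have "multiplicity p chi \<le> multiplicity p (Xp * q)" using dv qnz Xnz by (intro dvd_imp_multiplicity_le) auto
  also have "\<dots> = multiplicity p Xp + multiplicity p q"
    by (rule prime_elem_multiplicity_mult_distrib[OF prime_imp_prime_elem[OF p] Xnz qnz])
  also have "multiplicity p q = (if p \<in> PF then 1 else 0)"
  proof -
    have "q = (\<Prod>p\<in>PF. p ^ (\<lambda>_. 1::nat) p)" unfolding q_def by simp
    then show ?thesis using multiplicity_prod_prime_powers[of PF p "\<lambda>_. 1"] p
      by (simp add: in_prime_factors_iff)
  qed
  also have "multiplicity p Xp = (if p = Xp then 1 else 0)"
  proof -
    have "Xp = (\<Prod>p\<in>{Xp}. p ^ (\<lambda>_. 1::nat) p)" by simp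
    then show ?thesis using multiplicity_prod_prime_powers[of "{Xp}" p "\<lambda>_. 1"] p prime_X by simp
  qed
  finally show ?thesis .
qed

lemma PF_prime: "p \<in> PF \<Longrightarrow> prime p" by (simp add: in_prime_factors_iff)

lemma mult_one: assumes "p \<in> PF" "p \<noteq> Xp" shows "multiplicity p chi = 1"
proof -
  have pr: "prime p" using assms(1) by (rule PF_prime)
  have "multiplicity p chi \<le> 1" using mult_bound[OF pr] assms by simp
  moreover have "0 < multiplicity p chi"
    using prime_multiplicity_gt_zero_iff[OF prime_imp_prime_elem[OF pr] chi_nz] assms(1)
    by (simp add: in_prime_factors_iff)
  ultimately show ?thesis by simp
qed

abbreviation ex where "ex \<equiv> multiplicity Xp chi"

lemma ex_le2: "ex \<le> 2" using mult_bound[OF prime_X] by (auto split: if_splits)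

lemma ex_zero: "Xp \<notin> PF \<Longrightarrow> ex = 0"
proof -
  assume "Xp \<notin> PF"
  then have "\<not> Xp dvd chi" using prime_X chi_nz by (auto simp: in_prime_factors_iff)
  then show ?thesis using prime_multiplicity_gt_zero_iff[OF prime_imp_prime_elem[OF prime_X] chi_nz] by simp
qed

abbreviation F0 where "F0 \<equiv> PF - {Xp}"

lemma chi_F0: "chi = Xp ^ ex * (\<Prod>F0)"
proof (cases "Xp \<in> PF")
  case True
  have "chi = Xp ^ ex * (\<Prod>p\<in>F0. p ^ multiplicity p chi)"
    using chi_prod prod.remove[OF PF_fin True, of "\<lambda>p. p ^ multiplicity p chi"] by simp
  also have "(\<Prod>p\<in>F0. p ^ multiplicity p chi) = (\<Prod>p\<in>F0. p)"
    by (rule prod.cong) (auto simp: mult_one)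
  finally show ?thesis by simp
next
  case False
  have "chi = (\<Prod>p\<in>PF. p ^ multiplicity p chi)" by (rule chi_prod)
  also have "\<dots> = (\<Prod>p\<in>PF. p)"
  proof (rule prod.cong[OF refl])
    fix x assume x: "x \<in> PF"
    then have "x \<noteq> Xp" using False by auto
    then show "x ^ multiplicity x chi = x" using mult_one[OF x] by simp
  qed
  finally show ?thesis using False ex_zero by simp
qed

lemma ker_nonzero:
  assumes P: "P \<in> PF"
  shows "\<exists>e. S P e = 0 \<and> e \<noteq> 0"
proof (rule ccontr)
  assume "\<not> ?thesis"
  then have inj: "S P e = 0 \<Longrightarrow> e = 0" for e by blast
  have pr: "prime P" using P by (rule PF_prime)
  obtain r where r: "chi = P * r" using P by (auto simp: in_prime_factors_iff elim: dvdE)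
  have "S r z = 0" for z
  proof (rule inj)
    have "S P (S r z) = S chi z" unfolding r by (simp add: poly_op_mult[OF Riclin])
    then show "S P (S r z) = 0" using chi_ann by simp
  qed
  then have dv: "chi dvd r" by (rule chi_min)
  have rnz: "r \<noteq> 0" using r chi_nz by auto
  have Pnz: "P \<noteq> 0" using pr by auto
  have "degree chi \<le> degree r" using dvd_imp_degree_le[OF dv rnz] .
  moreover have "degree chi = degree P + degree r" unfolding r by (rule degree_mult_eq[OF Pnz rnz])
  moreover have "degree P \<noteq> 0" using pr Pnz is_unit_iff_degree[OF Pnz] not_prime_unit by blast
  ultimately show False by simp
qed

lemma dim2:
  assumes D: "decomp I E" and i: "i \<in> I" and Ei: "E i = {x. S P x = 0}" and cp: "coprime P Xp"
    and ne: "\<exists>e. S P e = 0 \<and> e \<noteq> 0"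
  shows "2 \<le> dim (E i)"
proof (rule ccontr)
  assume "\<not> 2 \<le> dim (E i)"
  then have dle: "dim (E i) \<le> 1" by simp
  obtain e where e: "S P e = 0" "e \<noteq> 0" using ne by blast
  have eE: "e \<in> E i" using e Ei by simp
  have sE: "subspace (E i)" by (rule decomp_sub[OF D i])
  have ss: "span {e} \<subseteq> E i" using eE sE by (intro span_minimal) auto
  have "dim (span {e}) = 1" using e(2) by (simp add: dim_span dim_singleton)
  then have eq: "span {e} = E i" using subspace_dim_equal[OF subspace_span sE ss] dle by simp
  have linKe: "linear (K e)" using Kbil unfolding bilinear_def by simp
  have Ke: "K e a = 0" for a
  proof -
    obtain c where c: "\<forall>l\<in>I. c l \<in> E l" "a = (\<Sum>l\<in>I. c l)" using decomp_ex[OF D, of a] by blast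
    have "K e a = (\<Sum>l\<in>I. K e (c l))" unfolding c(2) by (rule linear_sum[OF linKe])
    also have "\<dots> = 0"
    proof (rule sum.neutral, rule ballI)
      fix l assume l: "l \<in> I"
      show "K e (c l) = 0"
      proof (cases "l = i")
        case True
        then have "c l \<in> span {e}" using c(1) l eq by simp
        then obtain t where "c l = t *\<^sub>R e" by (auto simp: span_singleton)
        then show ?thesis by (simp add: bilinear_rmul[OF Kbil] K_self)
      next
        case False
        show ?thesis by (rule cross_zero[OF D i l]) (use False eE c(1) l in auto)
      qed
    qed
    finally show ?thesis .
  qed
  have "Ric e = 0"
  proof (rule Bnd)
    fix y
    have "B (Ric e) y = trace_op (\<lambda>a. K e a *v y)" by (rule Ricdef)
    also have "\<dots> = trace_op (\<lambda>a::real^'n. 0::real^'n)" by (simp add: Ke)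
    finally show "B (Ric e) y = 0" by (simp add: trace_op_zero)
  qed
  then have "S Xp e = 0" by (simp add: poly_op_X[OF Riclin])
  then have "e = 0" using kernel_coprime[OF Riclin cp e(1)] by blast
  then show False using e(2) by simp
qed

end




context SS
begin

lemma main_loc:
  shows "\<exists>F :: real poly set. finite F
     \<and> min_poly Ric = \<Prod>F
     \<and> (\<forall>P\<in>F. lead_coeff P = 1 \<and> (irreducible P \<or> P = [:0,0,1:]))
     \<and> (\<forall>P\<in>F. \<forall>Q\<in>F. P \<noteq> Q \<longrightarrow> coprime P Q)
     \<and> (let Fs = F - {[:0,1:], [:0,0,1:]};
            Idx = insert None (Some ` Fs);
            E = (\<lambda>i. case i of None \<Rightarrow> {x. Ric (Ric x) = 0}
                              | Some P \<Rightarrow> {x. poly_op P Ric x = 0})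
        in (\<forall>P\<in>Fs. irreducible P \<and> coprime P [:0,1:])
         \<and> (\<forall>i\<in>Idx. \<forall>j\<in>Idx. i \<noteq> j \<longrightarrow> (\<forall>x\<in>E i. \<forall>y\<in>E j. B x y = 0))
         \<and> (\<forall>v. \<exists>c. (\<forall>i\<in>Idx. c i \<in> E i) \<and> v = (\<Sum>i\<in>Idx. c i))
         \<and> (\<forall>c. (\<forall>i\<in>Idx. c i \<in> E i) \<and> (\<Sum>i\<in>Idx. c i) = 0 \<longrightarrow> (\<forall>i\<in>Idx. c i = 0))
         \<and> (\<forall>i\<in>Idx. \<forall>u v x. x \<in> E i \<longrightarrow> K u v *v x \<in> E i)
         \<and> (\<forall>i\<in>Idx. \<forall>j\<in>Idx. i \<noteq> j \<longrightarrow> (\<forall>u\<in>E i. \<forall>v\<in>E j. K u v = 0))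
         \<and> (\<forall>P\<in>Fs. dim (E (Some P)) \<ge> 2)
         \<and> hol_alg K UNIV = {(\<Sum>i\<in>Idx. c i) | c. \<forall>i\<in>Idx. c i \<in> hol_alg K (E i)}
         \<and> (\<forall>i\<in>Idx. lie_subalgebra (hol_alg K (E i))))"
proof -
  define F where "F = (if ex = 0 then F0 else insert (Xp ^ ex) F0)"
  have F0prime: "P \<in> F0 \<Longrightarrow> prime P" for P using PF_prime by blast
  have finF0: "finite F0" by simp
  have X2nF0: "[:0,0,1:] \<notin> F0"
  proof
    assume "[:0,0,1:] \<in> F0"
    then have "prime (Xp ^ 2)" using F0prime X2_eq by simp
    then have "prime_elem (Xp ^ 2)" by (rule prime_imp_prime_elem)
    then show False by (simp only: prime_elem_power_iff) simp
  qed
  have Xe_notin: "Xp ^ ex \<notin> F0" if "ex \<noteq> 0"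
  proof -
    have "ex = 1 \<or> ex = 2" using that ex_le2 by auto
    then show ?thesis using X2nF0 X2_eq by auto
  qed
  have finF: "finite F" unfolding F_def by simp
  have prodF: "\<Prod>F = chi"
  proof (cases "ex = 0")
    case True
    then show ?thesis unfolding F_def using chi_F0 by simp
  next
    case False
    have "\<Prod>F = Xp ^ ex * \<Prod>F0" unfolding F_def using False Xe_notin[OF False] finF0 by simp
    then show ?thesis using chi_F0 by simp
  qed
  have Fprop: "\<forall>P\<in>F. lead_coeff P = 1 \<and> (irreducible P \<or> P = [:0,0,1:])"
  proof
    fix P assume P: "P \<in> F"
    show "lead_coeff P = 1 \<and> (irreducible P \<or> P = [:0,0,1:])"
    proof (cases "P \<in> F0")
      case True
      have pr: "prime P" using F0prime[OF True] .
      then show ?thesis using prime_lc[OF pr] prime_elem_imp_irreducible[OF prime_imp_prime_elem[OF pr]] by simp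
    next
      case False
      then have "ex \<noteq> 0" "P = Xp ^ ex" using P unfolding F_def by (auto split: if_splits)
      then have "P = Xp \<or> P = [:0,0,1:]" using ex_le2 X2_eq by (metis One_nat_def Suc_1 le_Suc_eq le_zero_eq power_one_right)
      then show ?thesis
      proof
        assume "P = Xp"
        then show ?thesis using prime_elem_imp_irreducible[OF prime_imp_prime_elem[OF prime_X]] by simp
      next
        assume "P = [:0,0,1:]"
        then show ?thesis by simp
      qed
    qed
  qed
  have copX: "coprime (Xp ^ m) Q" if "Q \<in> F0" for Q m
  proof -
    have "coprime Xp Q" using primes_coprime[OF prime_X F0prime[OF that]] that by auto
    then show ?thesis by (simp add: coprime_power_left_iff)
  qed
  have Fcop: "\<forall>P\<in>F. \<forall>Q\<in>F. P \<noteq> Q \<longrightarrow> coprime P Q"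
  proof (intro ballI impI)
    fix P Q assume P: "P \<in> F" and Q: "Q \<in> F" and PQ: "P \<noteq> Q"
    show "coprime P Q"
    proof (cases "P \<in> F0")
      case True
      show ?thesis
      proof (cases "Q \<in> F0")
        case True
        show ?thesis using primes_coprime[OF F0prime[OF \<open>P \<in> F0\<close>] F0prime[OF True] PQ] by blast
      next
        case False
        then have "Q = Xp ^ ex" using Q unfolding F_def by (auto split: if_splits)
        then show ?thesis using copX[OF \<open>P \<in> F0\<close>] by (simp add: coprime_commute)
      qed
    next
      case False
      then have PX: "P = Xp ^ ex" using P unfolding F_def by (auto split: if_splits)
      have "Q \<in> F0"
      proof (rule ccontr)
        assume "Q \<notin> F0"
        then have "Q = Xp ^ ex" using Q unfolding F_def by (auto split: if_splits)
        then show False using PX PQ by simp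
      qed
      then show ?thesis using copX PX by simp
    qed
  qed
  have Fs_eq: "F - {[:0,1:], [:0,0,1:]} = F0"
  proof -
    have "F0 - {[:0,1:], [:0,0,1:]} = F0" using X2nF0 by auto
    moreover have "Xp ^ ex \<in> {[:0,1:], [:0,0,1:]}" if "ex \<noteq> 0"
    proof -
      have "ex = 1 \<or> ex = 2" using that ex_le2 by auto
      then show ?thesis using X2_eq by auto
    qed
    ultimately show ?thesis unfolding F_def by auto
  qed
  define G where "G = (\<lambda>i. case i of None \<Rightarrow> [:0,0,1:] | Some P \<Rightarrow> (P :: real poly))"
  define Idx where "Idx = insert None (Some ` F0)"
  define E where "E = (\<lambda>i. case i of None \<Rightarrow> {x. Ric (Ric x) = 0} | Some P \<Rightarrow> {x. poly_op P Ric x = 0})"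
  have E_app: "(case i of None \<Rightarrow> {x. Ric (Ric x) = 0} | Some P \<Rightarrow> {x. poly_op P Ric x = 0}) = E i" for i
    unfolding E_def by simp
  have EG: "E i = {x. S (G i) x = 0}" for i
    unfolding E_def G_def by (cases i) (simp_all add: poly_op_X2[OF Riclin])
  have finIdx: "finite Idx" unfolding Idx_def by simp
  have copIdx: "\<forall>i\<in>Idx. \<forall>j\<in>Idx. i \<noteq> j \<longrightarrow> coprime (G i) (G j)"
  proof (intro ballI impI)
    fix i j assume i: "i \<in> Idx" and j: "j \<in> Idx" and ij: "i \<noteq> j"
    show "coprime (G i) (G j)"
    proof (cases i)
      case None
      then obtain Q where Q: "j = Some Q" "Q \<in> F0" using j ij unfolding Idx_def by auto
      then show ?thesis using None copX[OF Q(2), of 2] X2_eq unfolding G_def by simp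
    next
      case (Some P)
      then have P: "P \<in> F0" using i unfolding Idx_def by auto
      show ?thesis
      proof (cases j)
        case None
        then show ?thesis using Some copX[OF P, of 2] X2_eq unfolding G_def by (simp add: coprime_commute)
      next
        case (Some Q)
        then have Q: "Q \<in> F0" using j unfolding Idx_def by auto
        have "P \<noteq> Q" using ij \<open>i = Some P\<close> Some by simp
        then show ?thesis using \<open>i = Some P\<close> Some primes_coprime[OF F0prime[OF P] F0prime[OF Q]]
          unfolding G_def by simp
      qed
    qed
  qed
  have prodIdx: "(\<Prod>i\<in>Idx. G i) = [:0,0,1:] * \<Prod>F0"
  proof -
    have "None \<notin> Some ` F0" by auto
    then have "(\<Prod>i\<in>Idx. G i) = G None * (\<Prod>i\<in>Some ` F0. G i)" unfolding Idx_def by (simp add: finF0)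
    also have "(\<Prod>i\<in>Some ` F0. G i) = (\<Prod>P\<in>F0. G (Some P))"
      using prod.reindex[of Some F0 G] by (simp add: o_def)
    also have "\<dots> = \<Prod>F0" unfolding G_def by simp
    finally show ?thesis unfolding G_def by simp
  qed
  have annIdx: "S (\<Prod>i\<in>Idx. G i) x = 0" for x
  proof (rule poly_op_ann_dvd[OF Riclin])
    show "\<forall>z. S chi z = 0" using chi_ann by blast
    have "Xp ^ ex dvd Xp ^ 2" using ex_le2 by (rule le_imp_power_dvd)
    then have "Xp ^ ex * \<Prod>F0 dvd Xp ^ 2 * \<Prod>F0" by (rule mult_dvd_mono[OF _ dvd_refl])
    then have "Xp ^ ex * \<Prod>F0 dvd [:0,0,1:] * \<Prod>F0" by (simp only: X2_eq)
    then show "chi dvd (\<Prod>i\<in>Idx. G i)" by (simp only: chi_F0[symmetric] prodIdx)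
  qed
  have D: "decomp Idx E"
    unfolding decomp_def
  proof (intro conjI allI ballI impI)
    show "finite Idx" by (rule finIdx)
  next
    fix v
    obtain c where "\<forall>i\<in>Idx. S (G i) (c i) = 0" "v = (\<Sum>i\<in>Idx. c i)"
      using decomp_exists[OF Riclin finIdx copIdx annIdx] by blast
    then show "\<exists>c. (\<forall>i\<in>Idx. c i \<in> E i) \<and> v = (\<Sum>i\<in>Idx. c i)" using EG by blast
  next
    fix c i assume h: "(\<forall>i\<in>Idx. c i \<in> E i) \<and> (\<Sum>i\<in>Idx. c i) = 0" and i: "i \<in> Idx"
    have "\<forall>i\<in>Idx. S (G i) (c i) = 0" using h EG by blast
    then show "c i = 0" using decomp_unique[OF Riclin finIdx copIdx] h i by blast
  next
    fix i j x y assume i: "i \<in> Idx" and j: "j \<in> Idx" and ij: "i \<noteq> j" and x: "x \<in> E i" and y: "y \<in> E j"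
    show "B x y = 0" using orth_coprime[of "G i" "G j" x y] copIdx i j ij x y EG by blast
  next
    fix i u v x assume i: "i \<in> Idx" and x: "x \<in> E i"
    show "K u v *v x \<in> E i" using ker_inv[of "G i" x u v] x EG by blast
  next
    fix i assume "i \<in> Idx"
    show "subspace (E i)" unfolding EG by (rule subspace_ker[OF linS])
  qed
  have b1: "\<forall>P\<in>F0. irreducible P \<and> coprime P [:0,1:]"
  proof
    fix P assume P: "P \<in> F0"
    have pr: "prime P" by (rule F0prime[OF P])
    have "coprime P Xp" using primes_coprime[OF pr prime_X] P by auto
    then show "irreducible P \<and> coprime P [:0,1:]"
      using prime_elem_imp_irreducible[OF prime_imp_prime_elem[OF pr]] by simp
  qed
  have b2: "\<forall>i\<in>Idx. \<forall>j\<in>Idx. i \<noteq> j \<longrightarrow> (\<forall>x\<in>E i. \<forall>y\<in>E j. B x y = 0)"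
    using decomp_orth[OF D] by blast
  have b3: "\<forall>v. \<exists>c. (\<forall>i\<in>Idx. c i \<in> E i) \<and> v = (\<Sum>i\<in>Idx. c i)"
    using decomp_ex[OF D] by blast
  have b4: "\<forall>c. (\<forall>i\<in>Idx. c i \<in> E i) \<and> (\<Sum>i\<in>Idx. c i) = 0 \<longrightarrow> (\<forall>i\<in>Idx. c i = 0)"
    using decomp_uni[OF D] by blast
  have b5: "\<forall>i\<in>Idx. \<forall>u v x. x \<in> E i \<longrightarrow> K u v *v x \<in> E i"
    using decomp_inv[OF D] by blast
  have b6: "\<forall>i\<in>Idx. \<forall>j\<in>Idx. i \<noteq> j \<longrightarrow> (\<forall>u\<in>E i. \<forall>v\<in>E j. K u v = 0)"
    using cross_zero[OF D] by blast
  have b7: "\<forall>P\<in>F0. dim (E (Some P)) \<ge> 2"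
  proof
    fix P assume P: "P \<in> F0"
    have i: "Some P \<in> Idx" unfolding Idx_def using P by simp
    have Ei: "E (Some P) = {x. S P x = 0}" unfolding E_def by simp
    have cp: "coprime P Xp" using primes_coprime[OF F0prime[OF P] prime_X] P by auto
    have ne: "\<exists>e. S P e = 0 \<and> e \<noteq> 0" using ker_nonzero P by blast
    show "dim (E (Some P)) \<ge> 2" using dim2[OF D i Ei cp ne] by simp
  qed
  have b8: "hol_alg K UNIV = {(\<Sum>i\<in>Idx. c i) | c. \<forall>i\<in>Idx. c i \<in> hol_alg K (E i)}"
    by (rule hol_alg_decomp[OF D])
  have b9: "\<forall>i\<in>Idx. lie_subalgebra (hol_alg K (E i))"
  proof
    fix i assume i: "i \<in> Idx"
    show "lie_subalgebra (hol_alg K (E i))" by (rule lie_sub) (use decomp_inv[OF D i] in blast)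
  qed
  note BODY = b1 b2 b3 b4 b5 b6 b7 b8 b9
  show ?thesis
  proof (intro exI[of _ F] conjI)
    show "finite F" by (rule finF)
    show "min_poly Ric = \<Prod>F" using prodF by simp
    show "\<forall>P\<in>F. lead_coeff P = 1 \<and> (irreducible P \<or> P = [:0,0,1:])" by (rule Fprop)
    show "\<forall>P\<in>F. \<forall>Q\<in>F. P \<noteq> Q \<longrightarrow> coprime P Q" by (rule Fcop)
    show "let Fs = F - {[:0,1:], [:0,0,1:]};
            Idx = insert None (Some ` Fs);
            E = (\<lambda>i. case i of None \<Rightarrow> {x. Ric (Ric x) = 0}
                              | Some P \<Rightarrow> {x. poly_op P Ric x = 0})
        in (\<forall>P\<in>Fs. irreducible P \<and> coprime P [:0,1:])
         \<and> (\<forall>i\<in>Idx. \<forall>j\<in>Idx. i \<noteq> j \<longrightarrow> (\<forall>x\<in>E i. \<forall>y\<in>E j. B x y = 0))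
         \<and> (\<forall>v. \<exists>c. (\<forall>i\<in>Idx. c i \<in> E i) \<and> v = (\<Sum>i\<in>Idx. c i))
         \<and> (\<forall>c. (\<forall>i\<in>Idx. c i \<in> E i) \<and> (\<Sum>i\<in>Idx. c i) = 0 \<longrightarrow> (\<forall>i\<in>Idx. c i = 0))
         \<and> (\<forall>i\<in>Idx. \<forall>u v x. x \<in> E i \<longrightarrow> K u v *v x \<in> E i)
         \<and> (\<forall>i\<in>Idx. \<forall>j\<in>Idx. i \<noteq> j \<longrightarrow> (\<forall>u\<in>E i. \<forall>v\<in>E j. K u v = 0))
         \<and> (\<forall>P\<in>Fs. dim (E (Some P)) \<ge> 2)
         \<and> hol_alg K UNIV = {(\<Sum>i\<in>Idx. c i) | c. \<forall>i\<in>Idx. c i \<in> hol_alg K (E i)}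
         \<and> (\<forall>i\<in>Idx. lie_subalgebra (hol_alg K (E i)))"
      unfolding Let_def Fs_eq E_app Idx_def[symmetric]
      using BODY by (intro conjI)
  qed
qed

end

theorem mainTheorem2:
  fixes B :: "real^'n \<Rightarrow> real^'n \<Rightarrow> real"
    and K :: "real^'n \<Rightarrow> real^'n \<Rightarrow> real^'n^'n"
    and Ric :: "real^'n \<Rightarrow> real^'n"
  assumes "pseudo_euclidean B"
    and "curvature_tensor B K"
    and "semi_symmetric K"
    and "is_ricci B K Ric"
  shows "\<exists>F :: real poly set. finite F
     \<and> min_poly Ric = \<Prod>F
     \<and> (\<forall>P\<in>F. lead_coeff P = 1 \<and> (irreducible P \<or> P = [:0,0,1:]))
     \<and> (\<forall>P\<in>F. \<forall>Q\<in>F. P \<noteq> Q \<longrightarrow> coprime P Q)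
     \<and> (let Fs = F - {[:0,1:], [:0,0,1:]};
            Idx = insert None (Some ` Fs);
            E = (\<lambda>i. case i of None \<Rightarrow> {x. Ric (Ric x) = 0}
                              | Some P \<Rightarrow> {x. poly_op P Ric x = 0})
        in (\<forall>P\<in>Fs. irreducible P \<and> coprime P [:0,1:])
         \<and> (\<forall>i\<in>Idx. \<forall>j\<in>Idx. i \<noteq> j \<longrightarrow> (\<forall>x\<in>E i. \<forall>y\<in>E j. B x y = 0))
         \<and> (\<forall>v. \<exists>c. (\<forall>i\<in>Idx. c i \<in> E i) \<and> v = (\<Sum>i\<in>Idx. c i))
         \<and> (\<forall>c. (\<forall>i\<in>Idx. c i \<in> E i) \<and> (\<Sum>i\<in>Idx. c i) = 0 \<longrightarrow> (\<forall>i\<in>Idx. c i = 0))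
         \<and> (\<forall>i\<in>Idx. \<forall>u v x. x \<in> E i \<longrightarrow> K u v *v x \<in> E i)
         \<and> (\<forall>i\<in>Idx. \<forall>j\<in>Idx. i \<noteq> j \<longrightarrow> (\<forall>u\<in>E i. \<forall>v\<in>E j. K u v = 0))
         \<and> (\<forall>P\<in>Fs. dim (E (Some P)) \<ge> 2)
         \<and> hol_alg K UNIV = {(\<Sum>i\<in>Idx. c i) | c. \<forall>i\<in>Idx. c i \<in> hol_alg K (E i)}
         \<and> (\<forall>i\<in>Idx. lie_subalgebra (hol_alg K (E i))))"
proof -
  interpret SS B K Ric using assms by unfold_locales
  show ?thesis by (rule main_loc)
qed


end
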